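(* Let $K$ be a (not necessarily associative) ring with identity $1_K$ and let $L$ be a field. Let $q\colon K\to L$ be a multiplicative quadratic map. Then one of the following holds: (1) there exist a composition algebra $M$ over $L$, with norm $N$, and a ring homomorphism $\varphi\colon K\to M$ such that $q(a)=N(\varphi(a))$ for all $a\in K$; (2) $\operatorname{char} L=2$ and $q$ is a ring homomorphism $K\to L$.
   Context: Let $K,L$ be (not necessarily associative) rings with identity. A map $q\colon K\to L$ is called a multiplicative quadratic map if (i) $q(ab)=q(a)q(b)$ for all $a,b\in K$; (ii) $q(n\cdot 1_K)=n^2\cdot 1_L$ for all $n\in\mathbb{Z}$; (iii) the map $f\colon K\times K\to L$, $f(a,b)=q(a+b)-q(a)-q(b)$, is biadditive. A composition algebra over a field $L$ is a unital, not necessarily associative, $L$-algebra $M$ together with a quadratic form $N\colon M\to L$ (its norm) whose associated bilinear form $N(x+y)-N(x)-N(y)$ is nondegenerate and which satisfies $N(xy)=N(x)N(y)$ for all $x,y\in M$. *)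

theory Defs
  imports "HOL-Algebra.Ring" "HOL-Algebra.Module"
begin

definition nonassoc_ring_1 :: "('a, 'b) ring_scheme \<Rightarrow> bool" where
  "nonassoc_ring_1 R \<longleftrightarrow>
     abelian_group R \<and>
     (\<forall>x\<in>carrier R. \<forall>y\<in>carrier R. x \<otimes>\<^bsub>R\<^esub> y \<in> carrier R) \<and>
     \<one>\<^bsub>R\<^esub> \<in> carrier R \<and>
     (\<forall>x\<in>carrier R. \<one>\<^bsub>R\<^esub> \<otimes>\<^bsub>R\<^esub> x = x \<and> x \<otimes>\<^bsub>R\<^esub> \<one>\<^bsub>R\<^esub> = x) \<and>
     (\<forall>x\<in>carrier R. \<forall>y\<in>carrier R. \<forall>z\<in>carrier R.
        (x \<oplus>\<^bsub>R\<^esub> y) \<otimes>\<^bsub>R\<^esub> z = x \<otimes>\<^bsub>R\<^esub> z \<oplus>\<^bsub>R\<^esub> y \<otimes>\<^bsub>R\<^esub> z \<and>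
        z \<otimes>\<^bsub>R\<^esub> (x \<oplus>\<^bsub>R\<^esub> y) = z \<otimes>\<^bsub>R\<^esub> x \<oplus>\<^bsub>R\<^esub> z \<otimes>\<^bsub>R\<^esub> y)"

definition mult_quadratic_map :: "('a, 'b) ring_scheme \<Rightarrow> ('a \<Rightarrow> 'l::field) \<Rightarrow> bool" where
  "mult_quadratic_map K q \<longleftrightarrow>
     (\<forall>a\<in>carrier K. \<forall>b\<in>carrier K. q (a \<otimes>\<^bsub>K\<^esub> b) = q a * q b) \<and>
     (\<forall>n::int. q ([n] \<cdot>\<^bsub>K\<^esub> \<one>\<^bsub>K\<^esub>) = of_int (n^2)) \<and>
     (let f = (\<lambda>a b. q (a \<oplus>\<^bsub>K\<^esub> b) - q a - q b) in
        (\<forall>a\<in>carrier K. \<forall>a'\<in>carrier K. \<forall>b\<in>carrier K.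
            f (a \<oplus>\<^bsub>K\<^esub> a') b = f a b + f a' b \<and>
            f b (a \<oplus>\<^bsub>K\<^esub> a') = f b a + f b a'))"

definition nonassoc_algebra :: "('l::field, 'm) module \<Rightarrow> bool" where
  "nonassoc_algebra M \<longleftrightarrow>
     nonassoc_ring_1 M \<and>
     (\<forall>c. \<forall>x\<in>carrier M. c \<odot>\<^bsub>M\<^esub> x \<in> carrier M) \<and>
     (\<forall>c d. \<forall>x\<in>carrier M. \<forall>y\<in>carrier M.
        c \<odot>\<^bsub>M\<^esub> (x \<oplus>\<^bsub>M\<^esub> y) = c \<odot>\<^bsub>M\<^esub> x \<oplus>\<^bsub>M\<^esub> c \<odot>\<^bsub>M\<^esub> y \<and>
        (c + d) \<odot>\<^bsub>M\<^esub> x = c \<odot>\<^bsub>M\<^esub> x \<oplus>\<^bsub>M\<^esub> d \<odot>\<^bsub>M\<^esub> x \<and>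
        (c * d) \<odot>\<^bsub>M\<^esub> x = c \<odot>\<^bsub>M\<^esub> (d \<odot>\<^bsub>M\<^esub> x) \<and>
        1 \<odot>\<^bsub>M\<^esub> x = x \<and>
        (c \<odot>\<^bsub>M\<^esub> x) \<otimes>\<^bsub>M\<^esub> y = c \<odot>\<^bsub>M\<^esub> (x \<otimes>\<^bsub>M\<^esub> y) \<and>
        x \<otimes>\<^bsub>M\<^esub> (c \<odot>\<^bsub>M\<^esub> y) = c \<odot>\<^bsub>M\<^esub> (x \<otimes>\<^bsub>M\<^esub> y))"

definition quadratic_form :: "('l::field, 'm) module \<Rightarrow> ('m \<Rightarrow> 'l) \<Rightarrow> bool" where
  "quadratic_form M N \<longleftrightarrow>
     (\<forall>c. \<forall>x\<in>carrier M. N (c \<odot>\<^bsub>M\<^esub> x) = c^2 * N x) \<and>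
     (let B = (\<lambda>x y. N (x \<oplus>\<^bsub>M\<^esub> y) - N x - N y) in
        \<forall>c. \<forall>x\<in>carrier M. \<forall>x'\<in>carrier M. \<forall>y\<in>carrier M.
          B (x \<oplus>\<^bsub>M\<^esub> x') y = B x y + B x' y \<and>
          B (c \<odot>\<^bsub>M\<^esub> x) y = c * B x y \<and>
          B y (x \<oplus>\<^bsub>M\<^esub> x') = B y x + B y x' \<and>
          B y (c \<odot>\<^bsub>M\<^esub> x) = c * B y x)"

definition composition_algebra :: "('l::field, 'm) module \<Rightarrow> ('m \<Rightarrow> 'l) \<Rightarrow> bool" where
  "composition_algebra M N \<longleftrightarrow>
     nonassoc_algebra M \<and> quadratic_form M N \<and>
     (\<forall>x\<in>carrier M. (\<forall>y\<in>carrier M. N (x \<oplus>\<^bsub>M\<^esub> y) - N x - N y = 0) \<longrightarrow> x = \<zero>\<^bsub>M\<^esub>) \<and>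
     (\<forall>x\<in>carrier M. \<forall>y\<in>carrier M. N (x \<otimes>\<^bsub>M\<^esub> y) = N x * N y)"

definition ring_hom_to_field :: "('a, 'b) ring_scheme \<Rightarrow> ('a \<Rightarrow> 'l::field) \<Rightarrow> bool" where
  "ring_hom_to_field K h \<longleftrightarrow>
     (\<forall>x\<in>carrier K. \<forall>y\<in>carrier K.
        h (x \<otimes>\<^bsub>K\<^esub> y) = h x * h y \<and> h (x \<oplus>\<^bsub>K\<^esub> y) = h x + h y) \<and>
     h \<one>\<^bsub>K\<^esub> = 1"

end

theory Submission
  imports Defs "HOL-Library.Function_Algebras"
begin


locale calg =
  fixes C :: "'m::ab_group_add set" and sc :: "'l::field \<Rightarrow> 'm \<Rightarrow> 'm"
    and mul :: "'m \<Rightarrow> 'm \<Rightarrow> 'm" and one :: 'm and N :: "'m \<Rightarrow> 'l"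
  assumes zero_C: "0 \<in> C"
    and add_C: "x \<in> C \<Longrightarrow> y \<in> C \<Longrightarrow> x + y \<in> C"
    and sc_C: "x \<in> C \<Longrightarrow> sc c x \<in> C"
    and sc_add: "sc c (x + y) = sc c x + sc c y"
    and sc_add2: "sc (c + d) x = sc c x + sc d x"
    and sc_mult: "sc (c * d) x = sc c (sc d x)"
    and sc_one: "sc 1 x = x"
    and mul_C: "x \<in> C \<Longrightarrow> y \<in> C \<Longrightarrow> mul x y \<in> C"
    and one_C: "one \<in> C"
    and mul_add_l: "x \<in> C \<Longrightarrow> y \<in> C \<Longrightarrow> z \<in> C \<Longrightarrow> mul (x + y) z = mul x z + mul y z"
    and mul_add_r: "x \<in> C \<Longrightarrow> y \<in> C \<Longrightarrow> z \<in> C \<Longrightarrow> mul z (x + y) = mul z x + mul z y"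
    and mul_sc_l: "x \<in> C \<Longrightarrow> y \<in> C \<Longrightarrow> mul (sc c x) y = sc c (mul x y)"
    and mul_sc_r: "x \<in> C \<Longrightarrow> y \<in> C \<Longrightarrow> mul x (sc c y) = sc c (mul x y)"
    and one_l: "x \<in> C \<Longrightarrow> mul one x = x"
    and one_r: "x \<in> C \<Longrightarrow> mul x one = x"
    and N_sc: "x \<in> C \<Longrightarrow> N (sc c x) = c^2 * N x"
    and B_add_l: "x \<in> C \<Longrightarrow> x' \<in> C \<Longrightarrow> y \<in> C \<Longrightarrow>
        N (x + x' + y) - N (x + x') - N y = (N (x + y) - N x - N y) + (N (x' + y) - N x' - N y)"
    and B_sc_l: "x \<in> C \<Longrightarrow> y \<in> C \<Longrightarrow>
        N (sc c x + y) - N (sc c x) - N y = c * (N (x + y) - N x - N y)"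
    and N_mul: "x \<in> C \<Longrightarrow> y \<in> C \<Longrightarrow> N (mul x y) = N x * N y"
    and nondeg: "x \<in> C \<Longrightarrow> (\<forall>y\<in>C. N (x + y) - N x - N y = 0) \<Longrightarrow> x = 0"
    and N_one: "N one = 1"
begin

definition B where "B x y = N (x + y) - N x - N y"

lemma sc_zero[simp]: "sc 0 x = 0"
  using sc_add2[of 0 0 x] by simp
lemma sc_minus: "sc (- c) x = - sc c x"
  using sc_add2[of "-c" c x] by (simp add: eq_neg_iff_add_eq_0 add.commute)
lemma sc_zero2[simp]: "sc c 0 = 0"
  using sc_add[of c 0 0] by simp
lemma sc_neg: "sc c (- x) = - sc c x"
  using sc_add[of c x "-x"] by (simp add: eq_neg_iff_add_eq_0 add.commute)
lemma sc_diff: "sc c (x - y) = sc c x - sc c y"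
  using sc_add[of c x "-y"] sc_neg by simp
lemma sc_diff2: "sc (c - d) x = sc c x - sc d x"
  using sc_add2[of c "-d" x] sc_minus by simp

lemma neg_C: "x \<in> C \<Longrightarrow> - x \<in> C"
  using sc_C[of x "-1"] sc_minus[of 1 x] sc_one by simp
lemma diff_C: "x \<in> C \<Longrightarrow> y \<in> C \<Longrightarrow> x - y \<in> C"
  using add_C[of x "-y"] neg_C by simp

lemmas CI = zero_C add_C sc_C mul_C one_C neg_C diff_C
declare CI[simp]

lemma B_sym: "B x y = B y x"
  unfolding B_def by (simp add: add.commute)

lemma B_add1: "x \<in> C \<Longrightarrow> x' \<in> C \<Longrightarrow> y \<in> C \<Longrightarrow> B (x + x') y = B x y + B x' y"
  unfolding B_def using B_add_l by simp
lemma B_add2: "x \<in> C \<Longrightarrow> x' \<in> C \<Longrightarrow> y \<in> C \<Longrightarrow> B y (x + x') = B y x + B y x'"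
  using B_add1 B_sym by metis
lemma B_sc1: "x \<in> C \<Longrightarrow> y \<in> C \<Longrightarrow> B (sc c x) y = c * B x y"
  unfolding B_def using B_sc_l by simp
lemma B_sc2: "x \<in> C \<Longrightarrow> y \<in> C \<Longrightarrow> B y (sc c x) = c * B y x"
  using B_sc1 B_sym by metis
lemma B_zero1[simp]: "y \<in> C \<Longrightarrow> B 0 y = 0"
proof -
  assume "y \<in> C"
  then have "B 0 y = B 0 y + B 0 y" using B_add1[of 0 0 y] zero_C by simp
  then show ?thesis by (metis add_cancel_left_right)
qed
lemma B_zero2[simp]: "y \<in> C \<Longrightarrow> B y 0 = 0"
  using B_zero1 B_sym by metis
lemma B_neg1: "x \<in> C \<Longrightarrow> y \<in> C \<Longrightarrow> B (- x) y = - B x y"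
  using B_add1[of x "-x" y] neg_C by (simp add: eq_neg_iff_add_eq_0 add.commute)
lemma B_neg2: "x \<in> C \<Longrightarrow> y \<in> C \<Longrightarrow> B y (- x) = - B y x"
  using B_neg1 B_sym by metis
lemma B_diff1: "x \<in> C \<Longrightarrow> x' \<in> C \<Longrightarrow> y \<in> C \<Longrightarrow> B (x - x') y = B x y - B x' y"
  using B_add1[of x "-x'" y] B_neg1 neg_C by simp
lemma B_diff2: "x \<in> C \<Longrightarrow> x' \<in> C \<Longrightarrow> y \<in> C \<Longrightarrow> B y (x - x') = B y x - B y x'"
  using B_diff1 B_sym by metis

lemmas Bsimps = B_add1 B_add2 B_sc1 B_sc2 B_neg1 B_neg2 B_diff1 B_diff2

lemma N_zero[simp]: "N 0 = 0"
  using N_sc[of 0 0] zero_C by simp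
lemma N_add: "N (x + y) = N x + N y + B x y"
  unfolding B_def by simp
lemma B_self: "x \<in> C \<Longrightarrow> B x x = 2 * N x"
proof -
  assume x: "x \<in> C"
  have "N (x + x) = N (sc 2 x)" using sc_add2[of 1 1 x] sc_one by simp
  also have "\<dots> = 4 * N x" using N_sc x by simp
  finally show ?thesis unfolding B_def by simp
qed
lemma N_neg: "x \<in> C \<Longrightarrow> N (- x) = N x"
  using N_sc[of x "-1"] sc_minus[of 1 x] sc_one by simp

lemma mul_zero_l[simp]: "y \<in> C \<Longrightarrow> mul 0 y = 0"
  using mul_add_l[of 0 0 y] zero_C by simp
lemma mul_zero_r[simp]: "y \<in> C \<Longrightarrow> mul y 0 = 0"
  using mul_add_r[of 0 0 y] zero_C by simp
lemma mul_neg_l: "x \<in> C \<Longrightarrow> y \<in> C \<Longrightarrow> mul (- x) y = - mul x y"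
  using mul_add_l[of x "-x" y] neg_C by (simp add: eq_neg_iff_add_eq_0 add.commute)
lemma mul_neg_r: "x \<in> C \<Longrightarrow> y \<in> C \<Longrightarrow> mul y (- x) = - mul y x"
  using mul_add_r[of x "-x" y] neg_C by (simp add: eq_neg_iff_add_eq_0 add.commute)
lemma mul_diff_l: "x \<in> C \<Longrightarrow> x' \<in> C \<Longrightarrow> y \<in> C \<Longrightarrow> mul (x - x') y = mul x y - mul x' y"
  using mul_add_l[of x "-x'" y] mul_neg_l neg_C by simp
lemma mul_diff_r: "x \<in> C \<Longrightarrow> x' \<in> C \<Longrightarrow> y \<in> C \<Longrightarrow> mul y (x - x') = mul y x - mul y x'"
  using mul_add_r[of x "-x'" y] mul_neg_r neg_C by simp

lemmas Msimps = mul_add_l mul_add_r mul_sc_l mul_sc_r mul_neg_l mul_neg_r mul_diff_l mul_diff_r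

lemma nondegB: "x \<in> C \<Longrightarrow> (\<And>y. y \<in> C \<Longrightarrow> B x y = 0) \<Longrightarrow> x = 0"
  using nondeg unfolding B_def by blast

lemma eqB: "x \<in> C \<Longrightarrow> x' \<in> C \<Longrightarrow> (\<And>y. y \<in> C \<Longrightarrow> B x y = B x' y) \<Longrightarrow> x = x'"
  using nondegB[of "x - x'"] by (simp add: diff_C B_diff1)

lemma Bi_l: "x \<in> C \<Longrightarrow> y \<in> C \<Longrightarrow> z \<in> C \<Longrightarrow> B (mul x y) (mul x z) = N x * B y z"
proof -
  assume C: "x \<in> C" "y \<in> C" "z \<in> C"
  have "N (mul x (y + z)) = N x * N (y + z)" using N_mul C add_C by blast
  then show ?thesis using C by (simp add: mul_add_r N_add N_mul mul_C algebra_simps)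
qed
lemma Bi_r: "x \<in> C \<Longrightarrow> y \<in> C \<Longrightarrow> z \<in> C \<Longrightarrow> B (mul x z) (mul y z) = N z * B x y"
proof -
  assume C: "x \<in> C" "y \<in> C" "z \<in> C"
  have "N (mul (x + y) z) = N (x + y) * N z" using N_mul C add_C by blast
  then show ?thesis using C by (simp add: mul_add_l N_add N_mul mul_C algebra_simps)
qed

lemma Bii_l: "x \<in> C \<Longrightarrow> y \<in> C \<Longrightarrow> z \<in> C \<Longrightarrow> w \<in> C \<Longrightarrow>
   B (mul x y) (mul w z) + B (mul x z) (mul w y) = B x w * B y z"
proof -
  assume C: "x \<in> C" "y \<in> C" "z \<in> C" "w \<in> C"
  have "B (mul (x + w) y) (mul (x + w) z) = N (x + w) * B y z" using Bi_l C add_C by blast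
  then show ?thesis using C
    by (simp add: mul_add_l Bsimps Bi_l N_add mul_C algebra_simps B_sym)
qed
lemma Bii_r: "x \<in> C \<Longrightarrow> y \<in> C \<Longrightarrow> z \<in> C \<Longrightarrow> w \<in> C \<Longrightarrow>
   B (mul y x) (mul z w) + B (mul y w) (mul z x) = B y z * B x w"
proof -
  assume C: "x \<in> C" "y \<in> C" "z \<in> C" "w \<in> C"
  have "B (mul y (x + w)) (mul z (x + w)) = N (x + w) * B y z" using Bi_r C add_C by blast
  then show ?thesis using C
    by (simp add: mul_add_r Bsimps Bi_r N_add mul_C algebra_simps B_sym)
qed

definition T where "T x = B x one"
definition bar where "bar x = sc (T x) one - x"

lemma bar_C: "x \<in> C \<Longrightarrow> bar x \<in> C"
  unfolding bar_def by (simp add: CI)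
lemma T_one: "T one = 2"
  unfolding T_def using B_self[OF one_C] N_one by simp
lemma T_bar: "x \<in> C \<Longrightarrow> T (bar x) = T x"
  unfolding T_def bar_def using one_C by (simp add: Bsimps CI T_one[unfolded T_def])
lemma bar_bar: "x \<in> C \<Longrightarrow> bar (bar x) = x"
  using T_bar unfolding bar_def by simp
lemma bar_add: "x \<in> C \<Longrightarrow> y \<in> C \<Longrightarrow> bar (x + y) = bar x + bar y"
  unfolding bar_def T_def using one_C by (simp add: Bsimps sc_add2)
lemma bar_sc: "x \<in> C \<Longrightarrow> bar (sc c x) = sc c (bar x)"
  unfolding bar_def T_def using one_C by (simp add: Bsimps sc_diff sc_mult)
lemma mul_bar_l: "x \<in> C \<Longrightarrow> z \<in> C \<Longrightarrow> mul (bar x) z = sc (T x) z - mul x z"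
  unfolding bar_def using one_C by (simp add: Msimps CI one_l)
lemma mul_bar_r: "x \<in> C \<Longrightarrow> z \<in> C \<Longrightarrow> mul z (bar x) = sc (T x) z - mul z x"
  unfolding bar_def using one_C by (simp add: Msimps CI one_r)

lemma Biii_l: "x \<in> C \<Longrightarrow> y \<in> C \<Longrightarrow> z \<in> C \<Longrightarrow> B (mul x y) z = B y (mul (bar x) z)"
proof -
  assume C: "x \<in> C" "y \<in> C" "z \<in> C"
  have "B (mul x y) (mul one z) + B (mul x z) (mul one y) = B x one * B y z"
    using Bii_l C one_C by blast
  then show ?thesis using C one_C
    by (simp add: one_l mul_bar_l Bsimps CI T_def B_sym[of "mul x z"] eq_diff_eq)
qed
lemma Biii_r: "x \<in> C \<Longrightarrow> y \<in> C \<Longrightarrow> z \<in> C \<Longrightarrow> B (mul y x) z = B y (mul z (bar x))"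
proof -
  assume C: "x \<in> C" "y \<in> C" "z \<in> C"
  have "B (mul y x) (mul z one) + B (mul y one) (mul z x) = B y z * B x one"
    using Bii_r C one_C by blast
  then show ?thesis using C one_C
    by (simp add: one_r mul_bar_r Bsimps CI T_def eq_diff_eq)
qed


lemma Biv_l: "x \<in> C \<Longrightarrow> y \<in> C \<Longrightarrow> mul (bar x) (mul x y) = sc (N x) y"
proof (rule eqB)
  fix z assume C: "x \<in> C" "y \<in> C" "z \<in> C"
  have "B (mul (bar x) (mul x y)) z = B (mul x y) (mul x z)"
    using Biii_l[of "bar x" "mul x y" z] C bar_C bar_bar by simp
  also have "\<dots> = B (sc (N x) y) z" using Bi_l C by (simp add: Bsimps)
  finally show "B (mul (bar x) (mul x y)) z = B (sc (N x) y) z" .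
qed (auto simp: bar_C)
lemma Biv_r: "x \<in> C \<Longrightarrow> y \<in> C \<Longrightarrow> mul (mul y x) (bar x) = sc (N x) y"
proof (rule eqB)
  fix z assume C: "x \<in> C" "y \<in> C" "z \<in> C"
  have "B (mul (mul y x) (bar x)) z = B (mul y x) (mul z x)"
    using Biii_r[of "bar x" "mul y x" z] C bar_C bar_bar by simp
  also have "\<dots> = B (sc (N x) y) z" using Bi_r C by (simp add: Bsimps)
  finally show "B (mul (mul y x) (bar x)) z = B (sc (N x) y) z" .
qed (auto simp: bar_C)

lemma Bv_l: "x \<in> C \<Longrightarrow> y \<in> C \<Longrightarrow> z \<in> C \<Longrightarrow>
  mul (bar x) (mul z y) + mul (bar z) (mul x y) = sc (B x z) y"
proof -
  assume C: "x \<in> C" "y \<in> C" "z \<in> C"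
  have "mul (bar (x + z)) (mul (x + z) y) = sc (N (x + z)) y" using Biv_l C by simp
  then show ?thesis using C Biv_l[of x y] Biv_l[of z y]
    by (simp add: bar_add Msimps bar_C N_add sc_add2 algebra_simps)
qed
lemma Bv_r: "x \<in> C \<Longrightarrow> y \<in> C \<Longrightarrow> z \<in> C \<Longrightarrow>
  mul (mul y x) (bar z) + mul (mul y z) (bar x) = sc (B x z) y"
proof -
  assume C: "x \<in> C" "y \<in> C" "z \<in> C"
  have "mul (mul y (x + z)) (bar (x + z)) = sc (N (x + z)) y" using Biv_r C by simp
  then show ?thesis using C Biv_r[of x y] Biv_r[of z y]
    by (simp add: bar_add Msimps bar_C N_add sc_add2 algebra_simps)
qed

lemma quad: "x \<in> C \<Longrightarrow> mul x x = sc (T x) x - sc (N x) one"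
proof -
  assume C: "x \<in> C"
  have "mul (bar x) (mul x one) = sc (N x) one" using Biv_l C one_C by blast
  then show ?thesis using C by (simp add: one_r mul_bar_l algebra_simps)
qed

lemma T_add: "x \<in> C \<Longrightarrow> y \<in> C \<Longrightarrow> T (x + y) = T x + T y"
  unfolding T_def by (simp add: Bsimps)
lemma T_sc: "x \<in> C \<Longrightarrow> T (sc c x) = c * T x"
  unfolding T_def by (simp add: Bsimps)

lemma linquad: "x \<in> C \<Longrightarrow> y \<in> C \<Longrightarrow>
   mul x y + mul y x = sc (T x) y + sc (T y) x - sc (B x y) one"
proof -
  assume C: "x \<in> C" "y \<in> C"
  have "mul (x + y) (x + y) = sc (T (x + y)) (x + y) - sc (N (x + y)) one" using quad C by simp
  then show ?thesis using C quad[of x] quad[of y]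
    by (simp add: Msimps T_add N_add sc_add2 sc_add algebra_simps)
qed

lemma T_mul: "x \<in> C \<Longrightarrow> y \<in> C \<Longrightarrow> T (mul x y) = T x * T y - B x y"
proof -
  assume C: "x \<in> C" "y \<in> C"
  have "T (mul x y) = B y (mul (bar x) one)" unfolding T_def using Biii_l C by simp
  also have "\<dots> = T x * T y - B x y" using C unfolding bar_def
    by (simp add: one_r Bsimps T_def B_sym)
  finally show ?thesis .
qed

lemma bar_mul: "x \<in> C \<Longrightarrow> y \<in> C \<Longrightarrow> bar (mul x y) = mul (bar y) (bar x)"
proof -
  assume C: "x \<in> C" "y \<in> C"
  have lq: "mul y x = sc (T x) y + sc (T y) x - sc (B x y) one - mul x y"
    using linquad C by (simp add: algebra_simps)
  show ?thesis using C unfolding bar_def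
    by (simp add: T_mul Msimps one_l one_r lq sc_diff2 sc_diff sc_mult algebra_simps)
qed

lemma N_bar: "x \<in> C \<Longrightarrow> N (bar x) = N x"
proof -
  assume C: "x \<in> C"
  have "N (bar x) = N (sc (T x) one) + N (- x) + B (sc (T x) one) (- x)"
    unfolding bar_def using N_add[of "sc (T x) one" "- x"] by simp
  then show ?thesis using C by (simp add: N_sc N_one N_neg Bsimps T_def B_sym power2_eq_square)
qed


definition subalg where
  "subalg S \<longleftrightarrow> S \<subseteq> C \<and> one \<in> S \<and> (\<forall>x\<in>S. \<forall>y\<in>S. x + y \<in> S \<and> mul x y \<in> S)
     \<and> (\<forall>c. \<forall>x\<in>S. sc c x \<in> S)"

definition orth where "orth S a \<longleftrightarrow> (\<forall>s\<in>S. B a s = 0)"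

context
  fixes S assumes S: "subalg S"
begin
lemma S_C: "x \<in> S \<Longrightarrow> x \<in> C" using S unfolding subalg_def by blast
lemma S_add: "x \<in> S \<Longrightarrow> y \<in> S \<Longrightarrow> x + y \<in> S" using S unfolding subalg_def by blast
lemma S_mul: "x \<in> S \<Longrightarrow> y \<in> S \<Longrightarrow> mul x y \<in> S" using S unfolding subalg_def by blast
lemma S_sc: "x \<in> S \<Longrightarrow> sc c x \<in> S" using S unfolding subalg_def by blast
lemma S_one: "one \<in> S" using S unfolding subalg_def by blast
lemma S_zero: "0 \<in> S" using S_sc[OF S_one, of 0] by simp
lemma S_neg: "x \<in> S \<Longrightarrow> - x \<in> S" using S_sc[of x "-1"] sc_minus[of 1 x] sc_one by simp
lemma S_diff: "x \<in> S \<Longrightarrow> y \<in> S \<Longrightarrow> x - y \<in> S" using S_add[of x "-y"] S_neg by simp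
lemma S_bar: "x \<in> S \<Longrightarrow> bar x \<in> S" unfolding bar_def by (simp add: S_diff S_sc S_one)
lemmas SI = S_add S_mul S_sc S_one S_zero S_neg S_diff S_bar

context fixes a assumes aC: "a \<in> C" and ao: "orth S a"
begin
lemma T_a: "T a = 0" using ao S_one unfolding orth_def T_def by blast
lemma bar_a: "bar a = - a" unfolding bar_def by (simp add: T_a)
lemma Da_orth: "x \<in> S \<Longrightarrow> y \<in> S \<Longrightarrow> B (mul y a) x = 0"
  using Biii_l[of y a x] ao aC S_C SI unfolding orth_def by simp
lemma Da_orth2: "x \<in> S \<Longrightarrow> y \<in> S \<Longrightarrow> B x (mul y a) = 0"
  using Da_orth B_sym by metis
lemma ax: "x \<in> S \<Longrightarrow> mul a x = mul (bar x) a"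
proof -
  assume x: "x \<in> S"
  have "B x a = 0" using ao x B_sym unfolding orth_def by metis
  then have "mul x a + mul a x = sc (T x) a" using linquad[of x a] x S_C aC T_a by simp
  then show ?thesis using x S_C aC by (simp add: mul_bar_l algebra_simps)
qed
lemma P1: "x \<in> S \<Longrightarrow> y \<in> S \<Longrightarrow> mul x (mul y a) = mul (mul y x) a"
proof -
  assume x: "x \<in> S" and y: "y \<in> S"
  have "B (bar x) a = 0" using ao SI x B_sym unfolding orth_def by metis
  then have "mul x (mul a (bar y)) + mul (bar a) (mul (bar x) (bar y)) = 0"
    using Bv_l[of "bar x" "bar y" a] x y S_C SI aC bar_bar by simp
  then have "mul x (mul a (bar y)) = mul a (mul (bar x) (bar y))"
    using x y S_C SI aC by (simp add: bar_a mul_neg_l)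
  also have "\<dots> = mul (bar (mul (bar x) (bar y))) a" using ax SI x y by simp
  also have "\<dots> = mul (mul y x) a" using bar_mul x y S_C SI bar_bar by simp
  finally show ?thesis using ax[of "bar y"] SI y bar_bar S_C by simp
qed
lemma P2: "y \<in> S \<Longrightarrow> z \<in> S \<Longrightarrow> mul (mul y a) z = mul (mul y (bar z)) a"
proof -
  assume y: "y \<in> S" and z: "z \<in> S"
  have "B a (bar z) = 0" using ao SI z unfolding orth_def by metis
  then have "mul (mul y a) z + mul (mul y (bar z)) (bar a) = 0"
    using Bv_r[of a y "bar z"] y z S_C SI aC bar_bar by simp
  then show ?thesis using y z S_C SI aC by (simp add: bar_a mul_neg_r eq_neg_iff_add_eq_0)
qed
lemma aa: "u \<in> C \<Longrightarrow> mul a (mul a u) = - sc (N a) u"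
proof -
  assume u: "u \<in> C"
  have "- mul a (mul a u) = sc (N a) u" using Biv_l[of a u] aC u by (simp add: bar_a mul_neg_l)
  then show ?thesis by (metis minus_minus)
qed
lemma P3: "y \<in> S \<Longrightarrow> w \<in> S \<Longrightarrow> mul (mul y a) (mul w a) = - sc (N a) (mul (bar w) y)"
proof -
  assume y: "y \<in> S" and w: "w \<in> S"
  note C = S_C[OF y] S_C[OF w] aC S_C[OF SI(8)[OF y]] S_C[OF SI(8)[OF w]]
  have Tya: "T (mul y a) = 0" unfolding T_def using Da_orth S_one y by blast
  have bya: "bar (mul y a) = - mul y a" unfolding bar_def Tya by simp
  have e1: "mul a (bar w) = mul w a" using ax[of "bar w"] w SI bar_bar C by simp
  have e2: "mul (mul y a) (bar w) = mul (mul y w) a" using P2[of y "bar w"] y w SI bar_bar C by simp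
  have e3: "mul (mul y w) a = mul a (bar (mul y w))" using ax[of "bar (mul y w)"] y w SI bar_bar C by simp
  have e4: "B (mul y a) a = N a * T y"
    using Bi_r[of y one a] C one_C one_l unfolding T_def by simp
  have "mul (bar (mul y a)) (mul a (bar w)) + mul (bar a) (mul (mul y a) (bar w))
        = sc (B (mul y a) a) (bar w)"
    using Bv_l[of "mul y a" "bar w" a] C by simp
  then have "- mul (mul y a) (mul w a) + sc (N a) (bar (mul y w)) = sc (N a * T y) (bar w)"
    using C by (simp add: bya e1 e2 e3 bar_a mul_neg_l aa bar_C e4)
  then have "mul (mul y a) (mul w a) = sc (N a) (mul (bar w) (bar y)) - sc (N a * T y) (bar w)"
    using C by (simp add: bar_mul algebra_simps)
  then show ?thesis using C by (simp add: mul_bar_r sc_diff sc_mult)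
qed

lemma prod_formula: "x \<in> S \<Longrightarrow> y \<in> S \<Longrightarrow> z \<in> S \<Longrightarrow> w \<in> S \<Longrightarrow>
  mul (x + mul y a) (z + mul w a) =
    (mul x z - sc (N a) (mul (bar w) y)) + mul (mul w x + mul y (bar z)) a"
proof -
  assume S: "x \<in> S" "y \<in> S" "z \<in> S" "w \<in> S"
  note C = S_C[OF S(1)] S_C[OF S(2)] S_C[OF S(3)] S_C[OF S(4)] aC S_C[OF SI(8)[OF S(3)]]
    S_C[OF SI(8)[OF S(4)]]
  have "mul (x + mul y a) (z + mul w a) = mul x z + mul x (mul w a) + (mul (mul y a) z + mul (mul y a) (mul w a))"
    using C by (simp add: mul_add_l mul_add_r add.assoc)
  also have "\<dots> = mul x z + mul (mul w x) a + (mul (mul y (bar z)) a - sc (N a) (mul (bar w) y))"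
    using S by (simp add: P1 P2 P3)
  also have "\<dots> = (mul x z - sc (N a) (mul (bar w) y)) + mul (mul w x + mul y (bar z)) a"
    using C by (simp add: mul_add_l)
  finally show ?thesis .
qed

lemma N_double: "x \<in> S \<Longrightarrow> y \<in> S \<Longrightarrow> N (x + mul y a) = N x + N y * N a"
  using Da_orth2[of x y] by (simp add: N_add N_mul S_C aC)

lemma assoc_eq: "x \<in> S \<Longrightarrow> y \<in> S \<Longrightarrow> z \<in> S \<Longrightarrow> w \<in> S \<Longrightarrow> N a \<noteq> 0 \<Longrightarrow>
  B (mul (mul w x) z) y = B (mul w (mul x z)) y"
proof -
  assume S: "x \<in> S" "y \<in> S" "z \<in> S" "w \<in> S" and Na: "N a \<noteq> 0"
  note C = S_C[OF S(1)] S_C[OF S(2)] S_C[OF S(3)] S_C[OF S(4)] aC S_C[OF SI(8)[OF S(3)]]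
    S_C[OF SI(8)[OF S(4)]]
  define p where "p = mul x z - sc (N a) (mul (bar w) y)"
  define r where "r = mul w x + mul y (bar z)"
  have pS: "p \<in> S" and rS: "r \<in> S" unfolding p_def r_def using S SI by auto
  have "N (mul (x + mul y a) (z + mul w a)) = N (x + mul y a) * N (z + mul w a)"
    using N_mul C by simp
  also have "mul (x + mul y a) (z + mul w a) = p + mul r a"
    using prod_formula[OF S(1,2,3,4)] unfolding p_def r_def .
  finally have e0: "N p + N r * N a = (N x + N y * N a) * (N z + N w * N a)"
    using N_double S pS rS by simp
  have "N p = N (mul x z) + N (- sc (N a) (mul (bar w) y)) + B (mul x z) (- sc (N a) (mul (bar w) y))"
    unfolding p_def using N_add[of "mul x z" "- sc (N a) (mul (bar w) y)"] by simp
  also have "\<dots> = N x * N z + (N a)^2 * (N w * N y) - N a * B (mul x z) (mul (bar w) y)"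
    using C by (simp add: N_neg N_sc N_mul N_bar B_neg2 B_sc2)
  finally have e1: "N p = N x * N z + (N a)^2 * (N w * N y) - N a * B (mul x z) (mul (bar w) y)" .
  have e2: "N r = N w * N x + N y * N z + B (mul w x) (mul y (bar z))"
    unfolding r_def using C by (simp add: N_add N_mul N_bar)
  have "N a * (B (mul w x) (mul y (bar z)) - B (mul x z) (mul (bar w) y)) = 0"
    using e0 unfolding e1 e2 by (simp add: algebra_simps power2_eq_square)
  then have "B (mul w x) (mul y (bar z)) = B (mul x z) (mul (bar w) y)" using Na by simp
  moreover have "B (mul (mul w x) z) y = B (mul w x) (mul y (bar z))"
    using Biii_r C by simp
  moreover have "B (mul w (mul x z)) y = B (mul x z) (mul (bar w) y)"
    using Biii_l C by simp
  ultimately show ?thesis by simp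
qed
end
end

end


context calg
begin

lemma sum_C: "(\<forall>i\<in>I. g i \<in> C) \<Longrightarrow> sum g I \<in> C"
  by (induction I rule: infinite_finite_induct) auto

lemma B_sum1: "(\<forall>i\<in>I. g i \<in> C) \<Longrightarrow> y \<in> C \<Longrightarrow> B (sum g I) y = (\<Sum>i\<in>I. B (g i) y)"
  by (induction I rule: infinite_finite_induct) (auto simp: B_add1 sum_C)
lemma B_sum2: "(\<forall>i\<in>I. g i \<in> C) \<Longrightarrow> y \<in> C \<Longrightarrow> B y (sum g I) = (\<Sum>i\<in>I. B y (g i))"
  by (subst B_sym, subst B_sum1) (auto simp: B_sym)
lemma mul_sum_l: "(\<forall>i\<in>I. g i \<in> C) \<Longrightarrow> y \<in> C \<Longrightarrow> mul (sum g I) y = (\<Sum>i\<in>I. mul (g i) y)"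
  by (induction I rule: infinite_finite_induct) (auto simp: mul_add_l sum_C)
lemma sc_sum: "sc c (sum g I) = (\<Sum>i\<in>I. sc c (g i))"
  by (induction I rule: infinite_finite_induct) (auto simp: sc_add)

lemma sum_split: "sum g {..<m + (k::nat)} = sum g {..<m} + (\<Sum>j<k. g (m + j))"
  by (induction k) (auto simp: add.assoc)

definition lc where "lc x ds es = (\<Sum>i<length ds. sc (B x (es ! i)) (ds ! i))"

definition good where
  "good S ds es \<longleftrightarrow> subalg S \<and> set ds \<subseteq> S \<and> set es \<subseteq> S \<and> length ds = length es \<and>
     (\<forall>x\<in>S. x = lc x ds es) \<and> (\<forall>x\<in>S. x = lc x es ds)"

context fixes S ds es assumes G: "good S ds es"
begin
lemma G_sub: "subalg S" using G unfolding good_def by blast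
lemma G_len: "length es = length ds" using G unfolding good_def by simp
lemma G_ds: "i < length ds \<Longrightarrow> ds ! i \<in> S" using G unfolding good_def by auto
lemma G_es: "i < length ds \<Longrightarrow> es ! i \<in> S" using G unfolding good_def by auto
lemma G_lc1: "x \<in> S \<Longrightarrow> x = lc x ds es" using G unfolding good_def by blast
lemma G_lc2: "x \<in> S \<Longrightarrow> x = lc x es ds" using G unfolding good_def by blast
lemma G_dsC: "i < length ds \<Longrightarrow> ds ! i \<in> C" using G_ds S_C[OF G_sub] by blast
lemma G_esC: "i < length ds \<Longrightarrow> es ! i \<in> C" using G_es S_C[OF G_sub] by blast

lemma lc_S: "lc x ds es \<in> S"
proof -
  have "\<And>n. n \<le> length ds \<Longrightarrow> (\<Sum>i<n. sc (B x (es ! i)) (ds ! i)) \<in> S"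
  proof -
    fix n show "n \<le> length ds \<Longrightarrow> (\<Sum>i<n. sc (B x (es ! i)) (ds ! i)) \<in> S"
      by (induction n) (simp_all add: S_zero[OF G_sub] S_add[OF G_sub] S_sc[OF G_sub] G_ds)
  qed
  then show ?thesis unfolding lc_def by blast
qed

lemma S_nondeg: "t \<in> S \<Longrightarrow> (\<And>s. s \<in> S \<Longrightarrow> B t s = 0) \<Longrightarrow> t = 0"
proof -
  assume t: "t \<in> S" and h: "\<And>s. s \<in> S \<Longrightarrow> B t s = 0"
  have "t = lc t ds es" using G_lc1 t by blast
  also have "\<dots> = 0" unfolding lc_def using h G_es by simp
  finally show ?thesis .
qed

lemma S_eq: "t \<in> S \<Longrightarrow> t' \<in> S \<Longrightarrow> (\<And>s. s \<in> S \<Longrightarrow> B t s = B t' s) \<Longrightarrow> t = t'"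
  using S_nondeg[of "t - t'"] S_diff[OF G_sub] S_C[OF G_sub] by (simp add: B_diff1)

lemma proj_orth: "x \<in> C \<Longrightarrow> orth S (x - lc x ds es)"
  unfolding orth_def
proof
  fix s assume x: "x \<in> C" and s: "s \<in> S"
  have sC: "s \<in> C" using s S_C[OF G_sub] by blast
  have "B x s = B x (lc s es ds)" using G_lc2 s by simp
  also have "\<dots> = (\<Sum>i<length ds. B s (ds ! i) * B x (es ! i))"
    unfolding lc_def G_len using x G_dsC G_esC by (simp add: B_sum2 B_sc2)
  finally have 1: "B x s = (\<Sum>i<length ds. B s (ds ! i) * B x (es ! i))" .
  have "B (lc x ds es) s = (\<Sum>i<length ds. B x (es ! i) * B (ds ! i) s)"
    unfolding lc_def using sC G_dsC G_esC by (simp add: B_sum1 B_sc1)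
  also have "\<dots> = (\<Sum>i<length ds. B s (ds ! i) * B x (es ! i))"
    by (rule sum.cong) (auto simp: B_sym[of s] mult.commute)
  finally have 2: "B (lc x ds es) s = (\<Sum>i<length ds. B s (ds ! i) * B x (es ! i))" .
  show "B (x - lc x ds es) s = 0"
    using 1 2 x sC lc_S S_C[OF G_sub] by (simp add: B_diff1)
qed

lemma ext: "S \<noteq> C \<Longrightarrow> \<exists>a\<in>C. orth S a \<and> N a \<noteq> 0"
proof -
  assume "S \<noteq> C"
  then obtain y where y: "y \<in> C" "y \<notin> S" using S_C[OF G_sub] by blast
  define y' where "y' = y - lc y ds es"
  have y'C: "y' \<in> C" unfolding y'_def using diff_C[OF y(1) S_C[OF G_sub lc_S]] .
  have oy: "orth S y'" unfolding y'_def using proj_orth y by simp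
  have "y' \<noteq> 0" proof
    assume "y' = 0" then have "y = lc y ds es" unfolding y'_def by simp
    then show False using lc_S y by metis
  qed
  then obtain z where z: "z \<in> C" "B y' z \<noteq> 0" using nondegB[OF y'C] by blast
  define z' where "z' = z - lc z ds es"
  have z'C: "z' \<in> C" unfolding z'_def using diff_C[OF z(1) S_C[OF G_sub lc_S]] .
  have oz: "orth S z'" unfolding z'_def using proj_orth z by simp
  have "B y' (lc z ds es) = 0" using oy lc_S unfolding orth_def by blast
  then have "B y' z' = B y' z" unfolding z'_def using B_diff2[OF z(1) S_C[OF G_sub lc_S] y'C]
    by simp
  then have Byz: "B y' z' \<noteq> 0" using z by simp
  have oyz: "orth S (y' + z')" unfolding orth_def
  proof
    fix s assume "s \<in> S"
    then show "B (y' + z') s = 0" using oy oz B_add1[OF y'C z'C S_C[OF G_sub \<open>s \<in> S\<close>]]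
      unfolding orth_def by simp
  qed
  show ?thesis
  proof (cases "N y' = 0")
    case False then show ?thesis using oy y'C by blast
  next
    case True
    show ?thesis
    proof (cases "N z' = 0")
      case False then show ?thesis using oz z'C by blast
    next
      case False2: True
      have "N (y' + z') \<noteq> 0" using True False2 Byz N_add[of y' z'] by simp
      then show ?thesis using oyz y'C z'C by auto
    qed
  qed
qed
end


definition dbl where "dbl S a = {x + mul y a | x y. x \<in> S \<and> y \<in> S}"
definition dds where "dds ds a = ds @ map (\<lambda>d. mul d a) ds"
definition des where "des es a = es @ map (\<lambda>e. sc (inverse (N a)) (mul e a)) es"

lemma dbl_mem: "x \<in> S \<Longrightarrow> y \<in> S \<Longrightarrow> x + mul y a \<in> dbl S a"
  unfolding dbl_def by blast

lemma subalg_dbl: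
  assumes S: "subalg S" and aC: "a \<in> C" and ao: "orth S a"
  shows "subalg (dbl S a)"
  unfolding subalg_def
proof (intro conjI ballI allI)
  note SC = S_C[OF S]
  show "dbl S a \<subseteq> C" unfolding dbl_def using SC aC by auto
  show "one \<in> dbl S a" using dbl_mem[OF S_one[OF S] S_zero[OF S], of a] aC by simp
  fix u v assume u: "u \<in> dbl S a" and v: "v \<in> dbl S a"
  obtain x y where xy: "x \<in> S" "y \<in> S" "u = x + mul y a" using u unfolding dbl_def by blast
  obtain z w where zw: "z \<in> S" "w \<in> S" "v = z + mul w a" using v unfolding dbl_def by blast
  have "u + v = (x + z) + mul (y + w) a" using xy zw SC aC by (simp add: mul_add_l algebra_simps)
  then show "u + v \<in> dbl S a" using dbl_mem[OF S_add[OF S xy(1) zw(1)] S_add[OF S xy(2) zw(2)]]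
    by simp
  show "mul u v \<in> dbl S a" unfolding xy zw prod_formula[OF S aC ao xy(1,2) zw(1,2)]
    by (rule dbl_mem) (use S xy zw in \<open>auto intro: SI\<close>)
next
  fix c u assume u: "u \<in> dbl S a"
  obtain x y where xy: "x \<in> S" "y \<in> S" "u = x + mul y a" using u unfolding dbl_def by blast
  have "sc c u = sc c x + mul (sc c y) a" using xy S_C[OF S] aC by (simp add: sc_add mul_sc_l)
  then show "sc c u \<in> dbl S a" using dbl_mem[OF S_sc[OF S xy(1)] S_sc[OF S xy(2)]] by simp
qed

lemma good_dbl:
  assumes G: "good S ds es" and aC: "a \<in> C" and ao: "orth S a" and Na: "N a \<noteq> 0"
  shows "good (dbl S a) (dds ds a) (des es a)"
proof -
  have S: "subalg S" using G_sub[OF G] .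
  note SC = S_C[OF S]
  define n where "n = length ds"
  have len: "length es = n" using G_len[OF G] n_def by simp
  have ds: "\<And>i. i < n \<Longrightarrow> ds ! i \<in> S" using G_ds[OF G] n_def by simp
  have es: "\<And>i. i < n \<Longrightarrow> es ! i \<in> S" using G_es[OF G] n_def len by (simp add: G_len[OF G])
  have dsC: "\<And>i. i < n \<Longrightarrow> ds ! i \<in> C" using ds SC by blast
  have esC: "\<And>i. i < n \<Longrightarrow> es ! i \<in> C" using es SC by blast
  have sub: "subalg (dbl S a)" using subalg_dbl[OF S aC ao] .
  have inS: "x \<in> dbl S a" if "x \<in> S" for x
    using dbl_mem[OF that S_zero[OF S], of a] aC SC by simp
  have inD: "mul y a \<in> dbl S a" if "y \<in> S" for y
    using dbl_mem[OF S_zero[OF S] that, of a] aC SC that by simp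
  have set1: "set (dds ds a) \<subseteq> dbl S a" unfolding dds_def using G inS inD
    unfolding good_def by auto
  have set2: "set (des es a) \<subseteq> dbl S a" unfolding des_def using G inS inD SC aC
    unfolding good_def by (auto simp: mul_sc_l[symmetric] intro!: inD S_sc[OF S])
  have len2: "length (dds ds a) = length (des es a)" unfolding dds_def des_def using G_len[OF G] by simp
  have ldds: "length (dds ds a) = n + n" unfolding dds_def n_def by simp
  have lc1: "lc u (dds ds a) (des es a) = u" if u: "u \<in> dbl S a" for u
  proof -
    obtain x y where xy: "x \<in> S" "y \<in> S" "u = x + mul y a" using u unfolding dbl_def by blast
    have uC: "u \<in> C" using xy SC aC by simp
    have b1: "B u (es ! i) = B x (es ! i)" if "i < n" for i
      using xy es[OF that] Da_orth[OF S aC ao, of "es ! i" y] SC aC by (simp add: B_add1)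
    have b2: "B u (sc (inverse (N a)) (mul (es ! i) a)) = B y (es ! i)" if "i < n" for i
      using xy esC[OF that] es[OF that] Da_orth2[OF S aC ao, of x "es ! i"] SC aC Na
        Bi_r[of y "es ! i" a] by (simp add: B_add1 B_sc2)
    have ln: "length ds = n" using n_def by simp
    have s1: "(\<Sum>i<n. sc (B u (des es a ! i)) (dds ds a ! i)) = (\<Sum>i<n. sc (B x (es ! i)) (ds ! i))"
      by (rule sum.cong) (simp_all add: dds_def des_def nth_append len ln b1)
    have s2: "(\<Sum>j<n. sc (B u (des es a ! (n + j))) (dds ds a ! (n + j)))
          = (\<Sum>j<n. sc (B y (es ! j)) (mul (ds ! j) a))"
      by (rule sum.cong) (simp_all add: dds_def des_def nth_append len ln b2)
    have "lc u (dds ds a) (des es a) = (\<Sum>i<n. sc (B x (es ! i)) (ds ! i))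
        + (\<Sum>j<n. sc (B y (es ! j)) (mul (ds ! j) a))"
      unfolding lc_def ldds sum_split s1 s2 ..
    also have "(\<Sum>j<n. sc (B y (es ! j)) (mul (ds ! j) a)) = mul (lc y ds es) a"
      unfolding lc_def n_def[symmetric] using dsC aC SC xy
      by (simp add: mul_sum_l mul_sc_l)
    also have "(\<Sum>i<n. sc (B x (es ! i)) (ds ! i)) = lc x ds es" unfolding lc_def n_def ..
    finally show ?thesis using G_lc1[OF G] xy by simp
  qed
  have lc2: "lc u (des es a) (dds ds a) = u" if u: "u \<in> dbl S a" for u
  proof -
    obtain x y where xy: "x \<in> S" "y \<in> S" "u = x + mul y a" using u unfolding dbl_def by blast
    have uC: "u \<in> C" using xy SC aC by simp
    have b1: "B u (ds ! i) = B x (ds ! i)" if "i < n" for i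
      using xy ds[OF that] Da_orth[OF S aC ao, of "ds ! i" y] SC aC by (simp add: B_add1)
    have b2: "sc (B u (mul (ds ! i) a)) (sc (inverse (N a)) (mul (es ! i) a))
         = sc (B y (ds ! i)) (mul (es ! i) a)" if "i < n" for i
      using xy dsC[OF that] ds[OF that] Da_orth2[OF S aC ao, of x "ds ! i"] SC aC Na
        Bi_r[of y "ds ! i" a] by (simp add: B_add1 sc_mult[symmetric] field_simps)
    have ln: "length ds = n" using n_def by simp
    have s1: "(\<Sum>i<n. sc (B u (dds ds a ! i)) (des es a ! i)) = (\<Sum>i<n. sc (B x (ds ! i)) (es ! i))"
      by (rule sum.cong) (simp_all add: dds_def des_def nth_append len ln b1)
    have s2: "(\<Sum>j<n. sc (B u (dds ds a ! (n + j))) (des es a ! (n + j)))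
          = (\<Sum>j<n. sc (B y (ds ! j)) (mul (es ! j) a))"
      by (rule sum.cong) (simp_all add: dds_def des_def nth_append len ln b2)
    have lde: "length (des es a) = n + n" unfolding des_def using len by simp
    have "lc u (des es a) (dds ds a) = (\<Sum>i<n. sc (B x (ds ! i)) (es ! i))
        + (\<Sum>j<n. sc (B y (ds ! j)) (mul (es ! j) a))"
      unfolding lc_def lde sum_split s1 s2 ..
    also have "(\<Sum>j<n. sc (B y (ds ! j)) (mul (es ! j) a)) = mul (lc y es ds) a"
      unfolding lc_def len using esC aC SC xy
      by (simp add: mul_sum_l mul_sc_l)
    also have "(\<Sum>i<n. sc (B x (ds ! i)) (es ! i)) = lc x es ds" unfolding lc_def len ..
    finally show ?thesis using G_lc2[OF G] xy by simp
  qed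
  show ?thesis unfolding good_def using sub set1 set2 len2 lc1 lc2 by auto
qed


lemma assoc_good:
  assumes G: "good S ds es" and aC: "a \<in> C" and ao: "orth S a" and Na: "N a \<noteq> 0"
    and w: "w \<in> S" and x: "x \<in> S" and z: "z \<in> S"
  shows "mul (mul w x) z = mul w (mul x z)"
proof (rule S_eq[OF G])
  have S: "subalg S" using G_sub[OF G] .
  show "mul (mul w x) z \<in> S" "mul w (mul x z) \<in> S" using S w x z by (auto intro: SI)
  fix y assume "y \<in> S"
  then show "B (mul (mul w x) z) y = B (mul w (mul x z)) y"
    using assoc_eq[OF S aC ao x _ z w Na] by simp
qed

lemma mul_a_cancel: "t \<in> C \<Longrightarrow> a \<in> C \<Longrightarrow> N a \<noteq> 0 \<Longrightarrow> mul t a = 0 \<Longrightarrow> t = 0"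
proof -
  assume t: "t \<in> C" and aC: "a \<in> C" and Na: "N a \<noteq> 0" and h: "mul t a = 0"
  have "sc (N a) t = 0" using Biv_r[OF aC t] h bar_C aC by simp
  then have "sc (inverse (N a)) (sc (N a) t) = 0" by simp
  then show ?thesis using Na by (simp add: sc_mult[symmetric] sc_one)
qed

lemma in_dbl1: "subalg S \<Longrightarrow> a \<in> C \<Longrightarrow> x \<in> S \<Longrightarrow> x \<in> dbl S a"
  using dbl_mem[of x S 0 a] S_zero[of S] by simp
lemma in_dbl2: "subalg S \<Longrightarrow> a \<in> C \<Longrightarrow> a \<in> dbl S a"
  using dbl_mem[of 0 S one a] S_zero[of S] S_one[of S] one_l by simp

lemma comm_lemma:
  assumes S: "subalg S" and aC: "a \<in> C" and ao: "orth S a" and Na: "N a \<noteq> 0"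
    and as: "\<And>u v w. u \<in> dbl S a \<Longrightarrow> v \<in> dbl S a \<Longrightarrow> w \<in> dbl S a \<Longrightarrow>
       mul (mul u v) w = mul u (mul v w)"
    and x: "x \<in> S" and y: "y \<in> S"
  shows "mul x y = mul y x"
proof -
  note SC = S_C[OF S]
  have "mul (mul x y) a = mul x (mul y a)" using as in_dbl1[OF S aC] in_dbl2[OF S aC] x y by blast
  also have "\<dots> = mul (mul y x) a" using P1[OF S aC ao x y] .
  finally have h: "mul (mul x y - mul y x) a = 0" using x y SC aC by (simp add: mul_diff_l)
  have "mul x y - mul y x = 0" by (rule mul_a_cancel[OF _ aC Na h]) (use x y SC in simp)
  then show ?thesis by simp
qed

lemma triv_lemma:
  assumes S: "subalg S" and aC: "a \<in> C" and ao: "orth S a" and Na: "N a \<noteq> 0"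
    and cm: "\<And>u v. u \<in> dbl S a \<Longrightarrow> v \<in> dbl S a \<Longrightarrow> mul u v = mul v u"
    and x: "x \<in> S"
  shows "bar x = x"
proof -
  note SC = S_C[OF S]
  have "mul x a = mul a x" using cm in_dbl1[OF S aC] in_dbl2[OF S aC] x by blast
  also have "\<dots> = mul (bar x) a" using ax[OF S aC ao x] .
  finally have h: "mul (x - bar x) a = 0" using x SC aC bar_C by (simp add: mul_diff_l)
  have "x - bar x = 0" by (rule mul_a_cancel[OF _ aC Na h]) (use x SC bar_C in simp)
  then show ?thesis by simp
qed


lemma B_one_one: "B one one = 2"
  using B_self[OF one_C] N_one by simp

lemma one_ne_zero: "one \<noteq> 0"
  using N_one N_zero by force

lemma base_ne2:
  assumes two: "(2::'l) \<noteq> 0"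
  shows "\<exists>S ds es. good S ds es \<and> (S = C \<or> (\<exists>x\<in>S. bar x \<noteq> x))"
proof -
  define S0 where "S0 = {sc c one | c. True}"
  have mem: "sc c one \<in> S0" for c unfolding S0_def by blast
  have sub: "subalg S0" unfolding subalg_def
  proof (intro conjI ballI allI)
    show "S0 \<subseteq> C" unfolding S0_def by auto
    show "one \<in> S0" using mem[of 1] sc_one by simp
    fix x y assume "x \<in> S0" "y \<in> S0"
    then obtain c d where "x = sc c one" "y = sc d one" unfolding S0_def by blast
    then show "x + y \<in> S0" "mul x y \<in> S0"
      using mem[of "c + d"] mem[of "d * c"] by (simp_all add: sc_add2 mul_sc_l mul_sc_r one_l sc_mult)
  next
    fix c x assume "x \<in> S0"
    then obtain d where "x = sc d one" unfolding S0_def by blast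
    then show "sc c x \<in> S0" using mem[of "c * d"] by (simp add: sc_mult)
  qed
  have G: "good S0 [one] [sc (inverse 2) one]" unfolding good_def
  proof (intro conjI ballI)
    show "subalg S0" by (rule sub)
    show "set [one] \<subseteq> S0" using mem[of 1] sc_one by simp
    show "set [sc (inverse 2) one] \<subseteq> S0" using mem by simp
    show "length [one] = length [sc (inverse 2) one]" by simp
  next
    fix x assume "x \<in> S0"
    then obtain c where x: "x = sc c one" unfolding S0_def by blast
    show "x = lc x [one] [sc (inverse 2) one]" unfolding lc_def x
      using two by (simp add: Bsimps B_one_one)
    show "x = lc x [sc (inverse 2) one] [one]" unfolding lc_def x
      using two by (simp add: Bsimps B_one_one sc_mult[symmetric])
  qed
  show ?thesis
  proof (cases "S0 = C")
    case True then show ?thesis using G by blast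
  next
    case False
    then obtain a where a: "a \<in> C" "orth S0 a" "N a \<noteq> 0" using ext[OF G] by blast
    have G1: "good (dbl S0 a) (dds [one] a) (des [sc (inverse 2) one] a)" using good_dbl[OF G a] .
    have "a \<in> dbl S0 a" using in_dbl2[OF sub a(1)] .
    moreover have "bar a \<noteq> a"
    proof
      assume "bar a = a"
      then have "- a = a" using bar_a[OF sub a(1,2)] by simp
      then have "sc 2 a = 0" using sc_add2[of 1 1 a] sc_one by (simp add: eq_neg_iff_add_eq_0[symmetric])
      then have "sc (inverse 2) (sc 2 a) = 0" by simp
      then have "a = 0" using two by (simp add: sc_mult[symmetric] sc_one)
      then show False using a(3) by simp
    qed
    ultimately show ?thesis using G1 by blast
  qed
qed

lemma base_2:
  assumes two: "(2::'l) = 0"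
  shows "\<exists>S ds es. good S ds es \<and> (S = C \<or> (\<exists>x\<in>S. bar x \<noteq> x))"
proof -
  obtain y where y: "y \<in> C" "B one y \<noteq> 0" using nondegB[OF one_C] one_ne_zero by blast
  define u where "u = sc (inverse (B one y)) y"
  have uC: "u \<in> C" unfolding u_def using y by simp
  have Bu: "B one u = 1" unfolding u_def using y by (simp add: B_sc2)
  have Buu: "B u u = 0" using B_self[OF uC] two by simp
  have Bo: "B one one = 0" using B_one_one two by simp
  have Tu: "T u = 1" unfolding T_def using Bu B_sym by metis
  define S1 where "S1 = {sc c one + sc d u | c d. True}"
  have mem: "sc c one + sc d u \<in> S1" for c d unfolding S1_def by blast
  have S1C: "S1 \<subseteq> C" unfolding S1_def using uC by auto
  have addS: "x + y \<in> S1" if xS: "x \<in> S1" and yS: "y \<in> S1" for x y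
  proof -
    obtain c d c' d' where xy: "x = sc c one + sc d u" "y = sc c' one + sc d' u"
      using xS yS unfolding S1_def by blast
    show ?thesis using mem[of "c + c'" "d + d'"] unfolding xy
      by (simp add: sc_add2 algebra_simps)
  qed
  have scS: "sc c x \<in> S1" if xS: "x \<in> S1" for c x
  proof -
    obtain d e where "x = sc d one + sc e u" using xS unfolding S1_def by blast
    then show "sc c x \<in> S1" using mem[of "c * d" "c * e"] by (simp add: sc_mult sc_add)
  qed
  have oneS: "one \<in> S1" using mem[of 1 0] sc_one by simp
  have uS: "u \<in> S1" using mem[of 0 1] sc_one by simp
  have uu: "mul u u = u - sc (N u) one" using quad[OF uC] Tu sc_one by simp
  have uuS: "mul u u \<in> S1" unfolding uu using mem[of "- N u" 1] sc_one by (simp add: sc_minus)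
  have sub: "subalg S1" unfolding subalg_def
  proof (intro conjI ballI allI)
    show "S1 \<subseteq> C" by (rule S1C)
    show "one \<in> S1" by (rule oneS)
    fix x y assume "x \<in> S1" "y \<in> S1"
    then obtain c d c' d' where xy: "x = sc c one + sc d u" "y = sc c' one + sc d' u"
      unfolding S1_def by blast
    show "x + y \<in> S1" using addS \<open>x \<in> S1\<close> \<open>y \<in> S1\<close> by blast
    show "mul x y \<in> S1" unfolding xy using uC addS scS oneS uS uuS
      by (simp add: mul_add_l mul_add_r mul_sc_l mul_sc_r one_l one_r)
  next
    fix c x assume "x \<in> S1"
    then show "sc c x \<in> S1" using scS by blast
  qed
  have G: "good S1 [one, u] [u, one]" unfolding good_def
  proof (intro conjI ballI)
    show "subalg S1" by (rule sub)
    show "set [one, u] \<subseteq> S1" "set [u, one] \<subseteq> S1" using mem[of 1 0] mem[of 0 1] sc_one by auto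
    show "length [one, u] = length [u, one]" by simp
  next
    fix x assume "x \<in> S1"
    then obtain c d where x: "x = sc c one + sc d u" unfolding S1_def by blast
    have b1: "B x u = c" unfolding x using uC Bu Buu by (simp add: Bsimps)
    have b2: "B x one = d" unfolding x using uC Bu Bo by (simp add: Bsimps B_sym[of u])
    show "x = lc x [one, u] [u, one]" unfolding lc_def using b1 b2 x
      by (simp add: lessThan_Suc add.commute)
    show "x = lc x [u, one] [one, u]" unfolding lc_def using b1 b2 x
      by (simp add: lessThan_Suc)
  qed
  have "u \<in> S1" using mem[of 0 1] sc_one by simp
  moreover have "bar u \<noteq> u"
  proof
    assume "bar u = u"
    then have "one - u = u" unfolding bar_def Tu sc_one .
    then have "one = u + u" by (simp add: algebra_simps)
    also have "u + u = sc 2 u" using sc_add2[of 1 1 u] sc_one by simp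
    finally show False using two one_ne_zero by simp
  qed
  ultimately show ?thesis using G by blast
qed

theorem hurwitz: "\<exists>ds es. good C ds es"
proof -
  obtain S1 ds1 es1 where G1: "good S1 ds1 es1" and h1: "S1 = C \<or> (\<exists>x\<in>S1. bar x \<noteq> x)"
    using base_ne2 base_2 by blast
  show ?thesis
  proof (cases "S1 = C")
    case True then show ?thesis using G1 by blast
  next
    case F1: False
    then obtain x1 where x1: "x1 \<in> S1" "bar x1 \<noteq> x1" using h1 by blast
    obtain a2 where a2: "a2 \<in> C" "orth S1 a2" "N a2 \<noteq> 0" using ext[OF G1 F1] by blast
    define S2 where "S2 = dbl S1 a2"
    have G2: "good S2 (dds ds1 a2) (des es1 a2)" unfolding S2_def using good_dbl[OF G1 a2] .
    show ?thesis
    proof (cases "S2 = C")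
      case True then show ?thesis using G2 by blast
    next
      case F2: False
      obtain a3 where a3: "a3 \<in> C" "orth S2 a3" "N a3 \<noteq> 0" using ext[OF G2 F2] by blast
      define S3 where "S3 = dbl S2 a3"
      have G3: "good S3 (dds (dds ds1 a2) a3) (des (des es1 a2) a3)"
        unfolding S3_def using good_dbl[OF G2 a3] .
      show ?thesis
      proof (cases "S3 = C")
        case True then show ?thesis using G3 by blast
      next
        case F3: False
        obtain a4 where a4: "a4 \<in> C" "orth S3 a4" "N a4 \<noteq> 0" using ext[OF G3 F3] by blast
        have as3: "\<And>u v w. u \<in> S3 \<Longrightarrow> v \<in> S3 \<Longrightarrow> w \<in> S3 \<Longrightarrow>
           mul (mul u v) w = mul u (mul v w)" using assoc_good[OF G3 a4] by blast
        have cm2: "\<And>u v. u \<in> S2 \<Longrightarrow> v \<in> S2 \<Longrightarrow> mul u v = mul v u"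
          using comm_lemma[OF G_sub[OF G2] a3] as3 unfolding S3_def by blast
        have "bar x1 = x1" using triv_lemma[OF G_sub[OF G1] a2] cm2 x1(1) unfolding S2_def by blast
        then show ?thesis using x1 by blast
      qed
    qed
  qed
qed

end


locale mqm =
  fixes K :: "('k, 'b) ring_scheme" and q :: "'k \<Rightarrow> 'l::field"
  assumes R: "nonassoc_ring_1 K" and Q: "mult_quadratic_map K q"
begin

definition f where "f a b = q (a \<oplus>\<^bsub>K\<^esub> b) - q a - q b"

abbreviation CK where "CK \<equiv> carrier K"

lemma AG: "abelian_group K" using R unfolding nonassoc_ring_1_def by blast
lemma mC: "a \<in> CK \<Longrightarrow> b \<in> CK \<Longrightarrow> a \<otimes>\<^bsub>K\<^esub> b \<in> CK" using R unfolding nonassoc_ring_1_def by blast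
lemma oneC: "\<one>\<^bsub>K\<^esub> \<in> CK" using R unfolding nonassoc_ring_1_def by blast
lemma one_l: "a \<in> CK \<Longrightarrow> \<one>\<^bsub>K\<^esub> \<otimes>\<^bsub>K\<^esub> a = a" using R unfolding nonassoc_ring_1_def by blast
lemma one_r: "a \<in> CK \<Longrightarrow> a \<otimes>\<^bsub>K\<^esub> \<one>\<^bsub>K\<^esub> = a" using R unfolding nonassoc_ring_1_def by blast
lemma dl: "x \<in> CK \<Longrightarrow> y \<in> CK \<Longrightarrow> z \<in> CK \<Longrightarrow>
   (x \<oplus>\<^bsub>K\<^esub> y) \<otimes>\<^bsub>K\<^esub> z = x \<otimes>\<^bsub>K\<^esub> z \<oplus>\<^bsub>K\<^esub> y \<otimes>\<^bsub>K\<^esub> z"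
  using R unfolding nonassoc_ring_1_def by blast
lemma dr: "x \<in> CK \<Longrightarrow> y \<in> CK \<Longrightarrow> z \<in> CK \<Longrightarrow>
   z \<otimes>\<^bsub>K\<^esub> (x \<oplus>\<^bsub>K\<^esub> y) = z \<otimes>\<^bsub>K\<^esub> x \<oplus>\<^bsub>K\<^esub> z \<otimes>\<^bsub>K\<^esub> y"
  using R unfolding nonassoc_ring_1_def by blast

lemma AM: "abelian_monoid K" using AG unfolding abelian_group_def by blast
lemma aC: "a \<in> CK \<Longrightarrow> b \<in> CK \<Longrightarrow> a \<oplus>\<^bsub>K\<^esub> b \<in> CK"
  using abelian_monoid.a_closed[OF AM] .
lemma a_comm: "a \<in> CK \<Longrightarrow> b \<in> CK \<Longrightarrow> a \<oplus>\<^bsub>K\<^esub> b = b \<oplus>\<^bsub>K\<^esub> a"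
  using abelian_monoid.a_comm[OF AM] .
lemma zC: "\<zero>\<^bsub>K\<^esub> \<in> CK" using abelian_monoid.zero_closed[OF AM] .
lemma z_l: "a \<in> CK \<Longrightarrow> \<zero>\<^bsub>K\<^esub> \<oplus>\<^bsub>K\<^esub> a = a" using abelian_monoid.l_zero[OF AM] .
lemma z_r: "a \<in> CK \<Longrightarrow> a \<oplus>\<^bsub>K\<^esub> \<zero>\<^bsub>K\<^esub> = a" using abelian_monoid.r_zero[OF AM] .

lemmas KC = mC oneC aC zC

lemma q_mul: "a \<in> CK \<Longrightarrow> b \<in> CK \<Longrightarrow> q (a \<otimes>\<^bsub>K\<^esub> b) = q a * q b"
  using Q unfolding mult_quadratic_map_def by blast
lemma q_int: "q ([n] \<cdot>\<^bsub>K\<^esub> \<one>\<^bsub>K\<^esub>) = of_int (n^2)"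
  using Q unfolding mult_quadratic_map_def by blast
lemma f_add1: "a \<in> CK \<Longrightarrow> a' \<in> CK \<Longrightarrow> b \<in> CK \<Longrightarrow> f (a \<oplus>\<^bsub>K\<^esub> a') b = f a b + f a' b"
  using Q unfolding mult_quadratic_map_def f_def Let_def by blast
lemma f_add2: "a \<in> CK \<Longrightarrow> a' \<in> CK \<Longrightarrow> b \<in> CK \<Longrightarrow> f b (a \<oplus>\<^bsub>K\<^esub> a') = f b a + f b a'"
  using Q unfolding mult_quadratic_map_def f_def Let_def by blast
lemma f_sym: "a \<in> CK \<Longrightarrow> b \<in> CK \<Longrightarrow> f a b = f b a"
  unfolding f_def by (simp add: a_comm)

lemma q_zero: "q \<zero>\<^bsub>K\<^esub> = 0"
  using q_int[of 0] by (simp add: add_pow_def)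
lemma q_one: "q \<one>\<^bsub>K\<^esub> = 1"
  using q_int[of 1] oneC by (simp add: add_pow_def int_pow_def2 z_l)
lemma q_two: "q (\<one>\<^bsub>K\<^esub> \<oplus>\<^bsub>K\<^esub> \<one>\<^bsub>K\<^esub>) = 4"
  using q_int[of 2] oneC by (simp add: add_pow_def int_pow_def2 z_l numeral_2_eq_2)

lemma f_zero1: "b \<in> CK \<Longrightarrow> f \<zero>\<^bsub>K\<^esub> b = 0"
proof -
  assume b: "b \<in> CK"
  have "f (\<zero>\<^bsub>K\<^esub> \<oplus>\<^bsub>K\<^esub> \<zero>\<^bsub>K\<^esub>) b = f \<zero>\<^bsub>K\<^esub> b + f \<zero>\<^bsub>K\<^esub> b"
    using f_add1[OF zC zC b] .
  then have "f \<zero>\<^bsub>K\<^esub> b = f \<zero>\<^bsub>K\<^esub> b + f \<zero>\<^bsub>K\<^esub> b" unfolding z_l[OF zC] .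
  then show ?thesis by (metis add_cancel_right_right)
qed

lemma f_self: "a \<in> CK \<Longrightarrow> f a a = 2 * q a"
proof -
  assume a: "a \<in> CK"
  have "a \<oplus>\<^bsub>K\<^esub> a = (\<one>\<^bsub>K\<^esub> \<oplus>\<^bsub>K\<^esub> \<one>\<^bsub>K\<^esub>) \<otimes>\<^bsub>K\<^esub> a"
    using dl[OF oneC oneC a] one_l[OF a] by simp
  then have "q (a \<oplus>\<^bsub>K\<^esub> a) = 4 * q a" using q_mul q_two a KC by simp
  then show ?thesis unfolding f_def by simp
qed

lemma f_mulr: "a \<in> CK \<Longrightarrow> b \<in> CK \<Longrightarrow> c \<in> CK \<Longrightarrow>
   f (a \<otimes>\<^bsub>K\<^esub> c) (b \<otimes>\<^bsub>K\<^esub> c) = q c * f a b"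
proof -
  assume C: "a \<in> CK" "b \<in> CK" "c \<in> CK"
  have "q (a \<otimes>\<^bsub>K\<^esub> c \<oplus>\<^bsub>K\<^esub> b \<otimes>\<^bsub>K\<^esub> c) = q (a \<oplus>\<^bsub>K\<^esub> b) * q c"
    using q_mul[of "a \<oplus>\<^bsub>K\<^esub> b" c] dl[OF C] C aC by simp
  then show ?thesis unfolding f_def using q_mul C by (simp add: algebra_simps)
qed
lemma f_mull: "a \<in> CK \<Longrightarrow> b \<in> CK \<Longrightarrow> c \<in> CK \<Longrightarrow>
   f (c \<otimes>\<^bsub>K\<^esub> a) (c \<otimes>\<^bsub>K\<^esub> b) = q c * f a b"
proof -
  assume C: "a \<in> CK" "b \<in> CK" "c \<in> CK"
  have "q (c \<otimes>\<^bsub>K\<^esub> a \<oplus>\<^bsub>K\<^esub> c \<otimes>\<^bsub>K\<^esub> b) = q c * q (a \<oplus>\<^bsub>K\<^esub> b)"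
    using q_mul[of c "a \<oplus>\<^bsub>K\<^esub> b"] dr[OF C] C aC by simp
  then show ?thesis unfolding f_def using q_mul C by (simp add: algebra_simps)
qed

lemma f_lin: "x \<in> CK \<Longrightarrow> y \<in> CK \<Longrightarrow> c \<in> CK \<Longrightarrow> d \<in> CK \<Longrightarrow>
   f (x \<otimes>\<^bsub>K\<^esub> c) (y \<otimes>\<^bsub>K\<^esub> d) + f (x \<otimes>\<^bsub>K\<^esub> d) (y \<otimes>\<^bsub>K\<^esub> c) = f x y * f c d"
proof -
  assume C: "x \<in> CK" "y \<in> CK" "c \<in> CK" "d \<in> CK"
  have "f (x \<otimes>\<^bsub>K\<^esub> (c \<oplus>\<^bsub>K\<^esub> d)) (y \<otimes>\<^bsub>K\<^esub> (c \<oplus>\<^bsub>K\<^esub> d)) = q (c \<oplus>\<^bsub>K\<^esub> d) * f x y"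
    using f_mulr C KC by simp
  moreover have "f (x \<otimes>\<^bsub>K\<^esub> (c \<oplus>\<^bsub>K\<^esub> d)) (y \<otimes>\<^bsub>K\<^esub> (c \<oplus>\<^bsub>K\<^esub> d)) =
      f (x \<otimes>\<^bsub>K\<^esub> c) (y \<otimes>\<^bsub>K\<^esub> c) + f (x \<otimes>\<^bsub>K\<^esub> c) (y \<otimes>\<^bsub>K\<^esub> d)
      + (f (x \<otimes>\<^bsub>K\<^esub> d) (y \<otimes>\<^bsub>K\<^esub> c) + f (x \<otimes>\<^bsub>K\<^esub> d) (y \<otimes>\<^bsub>K\<^esub> d))"
    using C KC by (simp add: dr f_add1 f_add2)
  moreover have "q (c \<oplus>\<^bsub>K\<^esub> d) = q c + q d + f c d" unfolding f_def by simp
  ultimately show ?thesis using C by (simp add: f_mulr algebra_simps)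
qed

lemma f_idr: "a \<in> CK \<Longrightarrow> b \<in> CK \<Longrightarrow> c \<in> CK \<Longrightarrow>
   f c (a \<otimes>\<^bsub>K\<^esub> b) = f b \<one>\<^bsub>K\<^esub> * f c a - f (c \<otimes>\<^bsub>K\<^esub> b) a"
proof -
  assume C: "a \<in> CK" "b \<in> CK" "c \<in> CK"
  have "f (a \<otimes>\<^bsub>K\<^esub> b) (c \<otimes>\<^bsub>K\<^esub> \<one>\<^bsub>K\<^esub>) + f (a \<otimes>\<^bsub>K\<^esub> \<one>\<^bsub>K\<^esub>) (c \<otimes>\<^bsub>K\<^esub> b) = f a c * f b \<one>\<^bsub>K\<^esub>"
    using f_lin C oneC by blast
  moreover have "f c (a \<otimes>\<^bsub>K\<^esub> b) = f (a \<otimes>\<^bsub>K\<^esub> b) c" "f (c \<otimes>\<^bsub>K\<^esub> b) a = f a (c \<otimes>\<^bsub>K\<^esub> b)"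
    "f c a = f a c" using f_sym C KC by auto
  ultimately show ?thesis using C KC by (simp add: one_r algebra_simps)
qed
lemma f_idl: "a \<in> CK \<Longrightarrow> b \<in> CK \<Longrightarrow> c \<in> CK \<Longrightarrow>
   f c (b \<otimes>\<^bsub>K\<^esub> a) = f b \<one>\<^bsub>K\<^esub> * f c a - f (b \<otimes>\<^bsub>K\<^esub> c) a"
proof -
  assume C: "a \<in> CK" "b \<in> CK" "c \<in> CK"
  have "f (b \<otimes>\<^bsub>K\<^esub> a) (\<one>\<^bsub>K\<^esub> \<otimes>\<^bsub>K\<^esub> c) + f (b \<otimes>\<^bsub>K\<^esub> c) (\<one>\<^bsub>K\<^esub> \<otimes>\<^bsub>K\<^esub> a) = f b \<one>\<^bsub>K\<^esub> * f a c"
    using f_lin C oneC by blast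
  moreover have "f c (b \<otimes>\<^bsub>K\<^esub> a) = f (b \<otimes>\<^bsub>K\<^esub> a) c" "f (b \<otimes>\<^bsub>K\<^esub> c) a = f a (b \<otimes>\<^bsub>K\<^esub> c)"
    "f c a = f a c" using f_sym C KC by auto
  ultimately show ?thesis using C KC by (simp add: one_l algebra_simps)
qed


definition VV :: "('l \<times> 'k) list set" where "VV = {v. \<forall>p\<in>set v. snd p \<in> CK}"
definition L where "L c v = sum_list (map (\<lambda>r. fst r * f c (snd r)) v)"
definition Bf where "Bf v w = sum_list (map (\<lambda>p. fst p * L (snd p) w) v)"
primrec Qf where
  "Qf [] = 0"
| "Qf (p # v) = fst p ^ 2 * q (snd p) + fst p * L (snd p) v + Qf v"
definition scl :: "'l \<Rightarrow> ('l \<times> 'k) list \<Rightarrow> ('l \<times> 'k) list" where "scl c v = map (\<lambda>p. (c * fst p, snd p)) v"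
definition lm :: "'l \<times> 'k \<Rightarrow> ('l \<times> 'k) list \<Rightarrow> ('l \<times> 'k) list" where "lm p w = map (\<lambda>r. (fst p * fst r, snd p \<otimes>\<^bsub>K\<^esub> snd r)) w"
primrec mulf :: "('l \<times> 'k) list \<Rightarrow> ('l \<times> 'k) list \<Rightarrow> ('l \<times> 'k) list" where
  "mulf [] w = []"
| "mulf (p # v) w = lm p w @ mulf v w"

lemma VV_simps[simp]: "[] \<in> VV" "(p # v \<in> VV) = (snd p \<in> CK \<and> v \<in> VV)"
  "(v @ w \<in> VV) = (v \<in> VV \<and> w \<in> VV)"
  unfolding VV_def by auto
lemma VV_scl[simp]: "(scl c v \<in> VV) = (v \<in> VV)" unfolding VV_def scl_def by auto
lemma VV_lm[simp]: "snd p \<in> CK \<Longrightarrow> w \<in> VV \<Longrightarrow> lm p w \<in> VV"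
  unfolding VV_def lm_def using mC by auto
lemma VV_mulf[simp]: "v \<in> VV \<Longrightarrow> w \<in> VV \<Longrightarrow> mulf v w \<in> VV"
  by (induction v) auto

lemma L_simps[simp]: "L c [] = 0" "L c (r # w) = fst r * f c (snd r) + L c w"
  "L c (v @ w) = L c v + L c w"
  unfolding L_def by auto
lemma L_scl[simp]: "L c (scl a v) = a * L c v"
  unfolding L_def scl_def by (induction v) (auto simp: algebra_simps)
lemma L_add: "c \<in> CK \<Longrightarrow> c' \<in> CK \<Longrightarrow> v \<in> VV \<Longrightarrow> L (c \<oplus>\<^bsub>K\<^esub> c') v = L c v + L c' v"
  by (induction v) (auto simp: f_add1 algebra_simps)

lemma Bf_simps[simp]: "Bf [] w = 0" "Bf (p # v) w = fst p * L (snd p) w + Bf v w"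
  "Bf (v @ v') w = Bf v w + Bf v' w" "Bf v [] = 0"
  unfolding Bf_def by auto
lemma Bf_cons2: "v \<in> VV \<Longrightarrow> snd r \<in> CK \<Longrightarrow> Bf v (r # w) = fst r * L (snd r) v + Bf v w"
  by (induction v) (auto simp: f_sym[of "snd r"] algebra_simps)
lemma Bf_app2[simp]: "Bf v (w @ w') = Bf v w + Bf v w'"
  by (induction v) (auto simp: algebra_simps)
lemma Bf_sym: "v \<in> VV \<Longrightarrow> w \<in> VV \<Longrightarrow> Bf v w = Bf w v"
  by (induction v) (auto simp: Bf_cons2)
lemma Bf_scl1[simp]: "Bf (scl a v) w = a * Bf v w"
  unfolding scl_def by (induction v) (auto simp: algebra_simps)
lemma Bf_scl2[simp]: "Bf v (scl a w) = a * Bf v w"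
  by (induction v) (auto simp: algebra_simps)

lemma Qf_app: "v \<in> VV \<Longrightarrow> w \<in> VV \<Longrightarrow> Qf (v @ w) = Qf v + Qf w + Bf v w"
  by (induction v) (auto simp: algebra_simps)
lemma scl_simps[simp]: "scl a [] = []" "scl a (p # v) = (a * fst p, snd p) # scl a v"
  "scl a (v @ w) = scl a v @ scl a w"
  unfolding scl_def by auto
lemma Qf_scl[simp]: "Qf (scl a v) = a^2 * Qf v"
  by (induction v) (auto simp: algebra_simps power2_eq_square)
lemma Bf_self: "v \<in> VV \<Longrightarrow> Bf v v = 2 * Qf v"
proof (induction v)
  case (Cons p v)
  then show ?case by (simp add: Bf_cons2 f_self algebra_simps power2_eq_square)
qed simp


lemma lm_simps[simp]: "lm p [] = []"
  "lm p (r # w) = (fst p * fst r, snd p \<otimes>\<^bsub>K\<^esub> snd r) # lm p w"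
  "lm p (w @ w') = lm p w @ lm p w'"
  unfolding lm_def by auto

lemma mulf_app1[simp]: "mulf (v @ v') w = mulf v w @ mulf v' w"
  by (induction v) auto
lemma mulf_scl1: "mulf (scl a v) w = scl a (mulf v w)"
  by (induction v) (simp_all add: lm_def scl_def algebra_simps)
lemma lm_scl: "lm p (scl a w) = scl a (lm p w)"
  by (induction w) (simp_all add: algebra_simps)
lemma mulf_scl2: "mulf v (scl a w) = scl a (mulf v w)"
  by (induction v) (auto simp: lm_scl)

lemma L_mulf_cons2: "L c (mulf v (r # w)) =
    sum_list (map (\<lambda>p. fst p * fst r * f c (snd p \<otimes>\<^bsub>K\<^esub> snd r)) v) + L c (mulf v w)"
  by (induction v) (auto simp: algebra_simps)

lemma L_mulf_app2: "L c (mulf w (v @ v')) = L c (mulf w v) + L c (mulf w v')"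
  by (induction w) (auto simp: algebra_simps)

lemma col_idr: "c \<in> CK \<Longrightarrow> snd r \<in> CK \<Longrightarrow> v \<in> VV \<Longrightarrow>
   sum_list (map (\<lambda>p. fst p * fst r * f c (snd p \<otimes>\<^bsub>K\<^esub> snd r)) v)
   = fst r * (f (snd r) \<one>\<^bsub>K\<^esub> * L c v - L (c \<otimes>\<^bsub>K\<^esub> snd r) v)"
  by (induction v) (auto simp: f_idr algebra_simps)

lemma LmulL: "c \<in> CK \<Longrightarrow> v \<in> VV \<Longrightarrow> w \<in> VV \<Longrightarrow>
  L c (mulf v w) = sum_list (map (\<lambda>r. fst r * (f (snd r) \<one>\<^bsub>K\<^esub> * L c v - L (c \<otimes>\<^bsub>K\<^esub> snd r) v)) w)"
proof (induction w)
  case Nil then show ?case by (induction v) auto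
next
  case (Cons r w)
  then show ?case by (simp add: L_mulf_cons2 col_idr)
qed

lemma L_lm_idl: "c \<in> CK \<Longrightarrow> snd p \<in> CK \<Longrightarrow> v \<in> VV \<Longrightarrow>
  L c (lm p v) = fst p * (f (snd p) \<one>\<^bsub>K\<^esub> * L c v - L (snd p \<otimes>\<^bsub>K\<^esub> c) v)"
  by (induction v) (auto simp: f_idl algebra_simps)

lemma LmulR: "c \<in> CK \<Longrightarrow> v \<in> VV \<Longrightarrow> w \<in> VV \<Longrightarrow>
  L c (mulf w v) = sum_list (map (\<lambda>p. fst p * (f (snd p) \<one>\<^bsub>K\<^esub> * L c v - L (snd p \<otimes>\<^bsub>K\<^esub> c) v)) w)"
  by (induction w) (auto simp: L_lm_idl)

lemma lm_cross: "x \<in> CK \<Longrightarrow> y \<in> CK \<Longrightarrow> z \<in> CK \<Longrightarrow> w \<in> VV \<Longrightarrow>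
  l * L (x \<otimes>\<^bsub>K\<^esub> y) (lm (k, z) w) + k * L (z \<otimes>\<^bsub>K\<^esub> y) (lm (l, x) w) = l * k * f x z * L y w"
proof (induction w)
  case (Cons r w)
  have "f (x \<otimes>\<^bsub>K\<^esub> y) (z \<otimes>\<^bsub>K\<^esub> snd r) = f x z * f y (snd r) - f (x \<otimes>\<^bsub>K\<^esub> snd r) (z \<otimes>\<^bsub>K\<^esub> y)"
    using f_lin[of x z y "snd r"] Cons by (simp add: eq_diff_eq)
  moreover have "f (z \<otimes>\<^bsub>K\<^esub> y) (x \<otimes>\<^bsub>K\<^esub> snd r) = f (x \<otimes>\<^bsub>K\<^esub> snd r) (z \<otimes>\<^bsub>K\<^esub> y)"
    using f_sym mC Cons by simp
  ultimately have e: "f (x \<otimes>\<^bsub>K\<^esub> y) (z \<otimes>\<^bsub>K\<^esub> snd r) + f (z \<otimes>\<^bsub>K\<^esub> y) (x \<otimes>\<^bsub>K\<^esub> snd r)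
     = f x z * f y (snd r)" by simp
  have "l * L (x \<otimes>\<^bsub>K\<^esub> y) (lm (k, z) (r # w)) + k * L (z \<otimes>\<^bsub>K\<^esub> y) (lm (l, x) (r # w))
     = (l * L (x \<otimes>\<^bsub>K\<^esub> y) (lm (k, z) w) + k * L (z \<otimes>\<^bsub>K\<^esub> y) (lm (l, x) w))
       + l * k * fst r * (f (x \<otimes>\<^bsub>K\<^esub> y) (z \<otimes>\<^bsub>K\<^esub> snd r) + f (z \<otimes>\<^bsub>K\<^esub> y) (x \<otimes>\<^bsub>K\<^esub> snd r))"
    by (simp add: algebra_simps)
  also have "\<dots> = l * k * f x z * L y (r # w)" using Cons e by (simp add: algebra_simps)
  finally show ?case .
qed simp

lemma L_lm_same: "x \<in> CK \<Longrightarrow> y \<in> CK \<Longrightarrow> w \<in> VV \<Longrightarrow>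
  L (x \<otimes>\<^bsub>K\<^esub> y) (lm (l, x) w) = l * q x * L y w"
  by (induction w) (auto simp: f_mull algebra_simps)

lemma Bf_lm_lm: "x \<in> CK \<Longrightarrow> z \<in> CK \<Longrightarrow> w \<in> VV \<Longrightarrow>
  Bf (lm (l, x) w) (lm (k, z) w) = l * k * f x z * Qf w"
proof (induction w)
  case (Cons r w)
  obtain m y where r: "r = (m, y)" by force
  have y: "y \<in> CK" using Cons r by simp
  have "Bf (lm (l, x) (r # w)) (lm (k, z) (r # w)) =
     l * m * (k * m * f (x \<otimes>\<^bsub>K\<^esub> y) (z \<otimes>\<^bsub>K\<^esub> y) + L (x \<otimes>\<^bsub>K\<^esub> y) (lm (k, z) w))
     + (k * m * L (z \<otimes>\<^bsub>K\<^esub> y) (lm (l, x) w) + Bf (lm (l, x) w) (lm (k, z) w))"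
    using Cons r y by (simp add: Bf_cons2 mC)
  also have "\<dots> = l * k * f x z * Qf (r # w)"
  proof -
    have "l * m * L (x \<otimes>\<^bsub>K\<^esub> y) (lm (k, z) w) + k * m * L (z \<otimes>\<^bsub>K\<^esub> y) (lm (l, x) w)
       = m * (l * k * f x z * L y w)" using arg_cong[OF lm_cross[of x y z w l k], of "\<lambda>t. m * t"] Cons y
      by (simp add: algebra_simps)
    then show ?thesis using Cons r y by (simp add: f_mulr algebra_simps power2_eq_square)
  qed
  finally show ?case .
qed simp

lemma Qf_lm: "x \<in> CK \<Longrightarrow> w \<in> VV \<Longrightarrow> Qf (lm (l, x) w) = l^2 * q x * Qf w"
  by (induction w) (auto simp: L_lm_same q_mul algebra_simps power2_eq_square)

lemma Bf_lm_mulf: "snd p \<in> CK \<Longrightarrow> v \<in> VV \<Longrightarrow> w \<in> VV \<Longrightarrow>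
  Bf (lm p w) (mulf v w) = fst p * L (snd p) v * Qf w"
proof (induction v)
  case (Cons p' v)
  then show ?case using Bf_lm_lm[of "snd p" "snd p'" w "fst p" "fst p'"]
    by (simp add: algebra_simps)
qed simp

lemma Qf_mulf: "v \<in> VV \<Longrightarrow> w \<in> VV \<Longrightarrow> Qf (mulf v w) = Qf v * Qf w"
proof (induction v)
  case (Cons p v)
  obtain l x where p: "p = (l, x)" by force
  show ?case using Cons p Qf_lm[of x w l] Bf_lm_mulf[of p v w]
    by (simp add: Qf_app algebra_simps)
qed simp


definition ev :: "('l \<times> 'k) list \<Rightarrow> 'k \<Rightarrow> 'l" where
  "ev v = (\<lambda>c. if c \<in> CK then L c v else 0)"
definition C0 where "C0 = ev ` VV"
definition rep where "rep x = (SOME v. v \<in> VV \<and> ev v = x)"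
definition mul0 where "mul0 x y = ev (mulf (rep x) (rep y))"
definition one0 where "one0 = ev [(1, \<one>\<^bsub>K\<^esub>)]"
definition N0 where "N0 x = Qf (rep x)"
definition sc0 :: "'l \<Rightarrow> ('k \<Rightarrow> 'l) \<Rightarrow> ('k \<Rightarrow> 'l)" where "sc0 c x = (\<lambda>k. c * x k)"

lemma ev_app: "ev (v @ w) = ev v + ev w"
  unfolding ev_def by (auto simp: fun_eq_iff)
lemma ev_nil: "ev [] = 0"
  unfolding ev_def by (auto simp: fun_eq_iff)
lemma ev_scl: "ev (scl a v) = sc0 a (ev v)"
  unfolding ev_def sc0_def by (auto simp: fun_eq_iff)
lemma ev_eq: "ev v = ev w \<longleftrightarrow> (\<forall>c\<in>CK. L c v = L c w)"
  unfolding ev_def fun_eq_iff by (metis)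
lemma ev_zero: "ev v = 0 \<longleftrightarrow> (\<forall>c\<in>CK. L c v = 0)"
  using ev_eq[of v "[]"] ev_nil by simp

lemma C0I: "v \<in> VV \<Longrightarrow> ev v \<in> C0" unfolding C0_def by blast
lemma C0E: "x \<in> C0 \<Longrightarrow> (\<And>v. v \<in> VV \<Longrightarrow> x = ev v \<Longrightarrow> P) \<Longrightarrow> P"
  unfolding C0_def by blast
lemma rep: "x \<in> C0 \<Longrightarrow> rep x \<in> VV \<and> ev (rep x) = x"
  unfolding rep_def C0_def by (rule someI_ex) blast

lemma wd_mul1: "v \<in> VV \<Longrightarrow> v' \<in> VV \<Longrightarrow> w \<in> VV \<Longrightarrow> ev v = ev v' \<Longrightarrow>
   ev (mulf v w) = ev (mulf v' w)"
  unfolding ev_eq by (auto simp: LmulL mC VV_def intro!: arg_cong[where f = sum_list] map_cong)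
lemma wd_mul2: "v \<in> VV \<Longrightarrow> v' \<in> VV \<Longrightarrow> w \<in> VV \<Longrightarrow> ev v = ev v' \<Longrightarrow>
   ev (mulf w v) = ev (mulf w v')"
  unfolding ev_eq by (auto simp: LmulR mC VV_def intro!: arg_cong[where f = sum_list] map_cong)

lemma mul0_ev: "v \<in> VV \<Longrightarrow> w \<in> VV \<Longrightarrow> mul0 (ev v) (ev w) = ev (mulf v w)"
proof -
  assume v: "v \<in> VV" and w: "w \<in> VV"
  have r1: "rep (ev v) \<in> VV" "ev (rep (ev v)) = ev v" using rep[OF C0I[OF v]] by auto
  have r2: "rep (ev w) \<in> VV" "ev (rep (ev w)) = ev w" using rep[OF C0I[OF w]] by auto
  have "ev (mulf (rep (ev v)) (rep (ev w))) = ev (mulf v (rep (ev w)))"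
    using wd_mul1 r1 r2 v by blast
  also have "\<dots> = ev (mulf v w)" using wd_mul2 r2 v w by blast
  finally show ?thesis unfolding mul0_def .
qed

lemma Bf_rad: "w \<in> VV \<Longrightarrow> (\<forall>c\<in>CK. L c v = 0) \<Longrightarrow> Bf w v = 0"
  by (induction w) auto

definition H where "H \<longleftrightarrow> (2::'l) \<noteq> 0 \<or> (\<exists>a\<in>CK. \<exists>b\<in>CK. f a b \<noteq> 0)"

lemma rad_Q: "H \<Longrightarrow> v \<in> VV \<Longrightarrow> (\<forall>c\<in>CK. L c v = 0) \<Longrightarrow> Qf v = 0"
proof -
  assume H: H and v: "v \<in> VV" and r: "\<forall>c\<in>CK. L c v = 0"
  show ?thesis
  proof (cases "(2::'l) = 0")
    case False
    have "Bf v v = 0" using Bf_rad v r by blast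
    then show ?thesis using Bf_self[OF v] False by simp
  next
    case True
    then obtain a b where ab: "a \<in> CK" "b \<in> CK" "f a b \<noteq> 0" using H unfolding H_def by blast
    have ra: "\<forall>c\<in>CK. L c (lm (1, a) v) = 0" using r v ab by (simp add: L_lm_idl mC)
    have "Bf (lm (1, b) v) (lm (1, a) v) = 0" using Bf_rad ra ab v by simp
    then have "f b a * Qf v = 0" using Bf_lm_lm[of b a v 1 1] ab v by simp
    then show ?thesis using ab f_sym by simp
  qed
qed

lemma wd_Q: "H \<Longrightarrow> v \<in> VV \<Longrightarrow> w \<in> VV \<Longrightarrow> ev v = ev w \<Longrightarrow> Qf v = Qf w"
proof -
  assume H: H and v: "v \<in> VV" and w: "w \<in> VV" and e: "ev v = ev w"
  define r where "r = w @ scl (-1) v"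
  have rV: "r \<in> VV" unfolding r_def using v w by simp
  have rr: "\<forall>c\<in>CK. L c r = 0" unfolding r_def using e unfolding ev_eq by simp
  have Qr: "Qf r = 0" using rad_Q[OF H rV rr] .
  have Bvr: "Bf v r = 0" using Bf_rad[OF v rr] .
  have "Qf (v @ r) = Qf v" using Qf_app[OF v rV] Qr Bvr by simp
  moreover have "Qf (v @ r) = Qf w"
    unfolding r_def using v w
    by (simp add: Qf_app Bf_self Bf_sym[of w v] algebra_simps power2_eq_square)
  ultimately show ?thesis by simp
qed

lemma N0_ev: "H \<Longrightarrow> v \<in> VV \<Longrightarrow> N0 (ev v) = Qf v"
  unfolding N0_def using rep[OF C0I] wd_Q by blast


lemma lm_one: "w \<in> VV \<Longrightarrow> lm (1, \<one>\<^bsub>K\<^esub>) w = w"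
  by (induction w) (auto simp: one_l)
lemma mulf_one: "v \<in> VV \<Longrightarrow> mulf v [(1, \<one>\<^bsub>K\<^esub>)] = v"
  by (induction v) (auto simp: one_r)

lemma B0_ev: "H \<Longrightarrow> v \<in> VV \<Longrightarrow> w \<in> VV \<Longrightarrow> N0 (ev v + ev w) - N0 (ev v) - N0 (ev w) = Bf v w"
  using N0_ev[of "v @ w"] N0_ev[of v] N0_ev[of w] ev_app[of v w] Qf_app[of v w] by simp

lemma calg: "H \<Longrightarrow> calg C0 sc0 mul0 one0 N0"
proof (unfold_locales)
  assume H: H
  show "0 \<in> C0" using C0I[of "[]"] ev_nil by simp
  fix x y assume "x \<in> C0" "y \<in> C0"
  then obtain v w where vw: "v \<in> VV" "w \<in> VV" "x = ev v" "y = ev w" by (metis C0E)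
  show "x + y \<in> C0" using C0I[of "v @ w"] vw ev_app by simp
  show "mul0 x y \<in> C0" using C0I[of "mulf v w"] vw mul0_ev by simp
  show "N0 (mul0 x y) = N0 x * N0 y" using vw mul0_ev N0_ev[OF H] Qf_mulf by simp
  show "mul0 x (sc0 c y) = sc0 c (mul0 x y)" for c
    using vw mul0_ev ev_scl[symmetric] mulf_scl2 by simp
  show "mul0 (sc0 c x) y = sc0 c (mul0 x y)" for c
    using vw mul0_ev ev_scl[symmetric] mulf_scl1 by simp
  show "N0 (sc0 c x + y) - N0 (sc0 c x) - N0 y = c * (N0 (x + y) - N0 x - N0 y)" for c
    using vw ev_scl[symmetric, of c v] B0_ev[OF H] by simp
next
  assume H: H
  fix x assume "x \<in> C0"
  then obtain v where v: "v \<in> VV" "x = ev v" by (metis C0E)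
  show "sc0 c x \<in> C0" for c using C0I[of "scl c v"] v ev_scl by simp
  show "mul0 one0 x = x" unfolding one0_def using v mul0_ev[of "[(1, \<one>\<^bsub>K\<^esub>)]" v] oneC
    by (simp add: lm_one)
  show "mul0 x one0 = x" unfolding one0_def using v mul0_ev[of v "[(1, \<one>\<^bsub>K\<^esub>)]"] oneC
    by (simp add: mulf_one)
  show "N0 (sc0 c x) = c\<^sup>2 * N0 x" for c using v ev_scl[symmetric, of c v] N0_ev[OF H] by simp
  assume nd: "\<forall>y\<in>C0. N0 (x + y) - N0 x - N0 y = 0"
  have "L c v = 0" if c: "c \<in> CK" for c
  proof -
    have "N0 (x + ev [(1, c)]) - N0 x - N0 (ev [(1, c)]) = 0" using nd C0I[of "[(1, c)]"] c by simp
    then show ?thesis using B0_ev[OF H v(1), of "[(1, c)]"] v c by (simp add: Bf_cons2)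
  qed
  then show "x = 0" using v ev_zero by simp
next
  fix x y z assume "x \<in> C0" "y \<in> C0" "z \<in> C0"
  then obtain u v w where uvw: "u \<in> VV" "v \<in> VV" "w \<in> VV" "x = ev u" "y = ev v" "z = ev w"
    by (metis C0E)
  show "mul0 (x + y) z = mul0 x z + mul0 y z"
    using uvw mul0_ev ev_app[symmetric] by simp
  show "mul0 z (x + y) = mul0 z x + mul0 z y"
    using uvw mul0_ev ev_app[symmetric] by (simp add: ev_eq L_mulf_app2)
  assume H: H
  show "N0 (x + y + z) - N0 (x + y) - N0 z = N0 (x + z) - N0 x - N0 z + (N0 (y + z) - N0 y - N0 z)"
    using uvw B0_ev[OF H, of "u @ v" w] B0_ev[OF H, of u w] B0_ev[OF H, of v w] ev_app[symmetric]
    by simp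
next
  show "one0 \<in> C0" unfolding one0_def using C0I oneC by simp
  assume H: H
  show "N0 one0 = 1" unfolding one0_def using N0_ev[OF H, of "[(1, \<one>\<^bsub>K\<^esub>)]"] oneC q_one by simp
qed (auto simp: sc0_def fun_eq_iff algebra_simps)

end

context calg
begin

lemma transport:
  assumes G: "good C ds es"
  shows "\<exists>(M :: ('l, nat \<Rightarrow> 'l) module) N' enc. composition_algebra M N' \<and>
     (\<forall>x\<in>C. enc x \<in> carrier M \<and> N' (enc x) = N x) \<and>
     (\<forall>x\<in>C. \<forall>y\<in>C. enc x \<otimes>\<^bsub>M\<^esub> enc y = enc (mul x y) \<and> enc x \<oplus>\<^bsub>M\<^esub> enc y = enc (x + y)) \<and>
     \<one>\<^bsub>M\<^esub> = enc one"
proof -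
  define enc :: "'m \<Rightarrow> nat \<Rightarrow> 'l" where
    "enc x = (\<lambda>i. if i < length ds then B x (es ! i) else 0)" for x
  have inj: "inj_on enc C"
  proof (rule inj_onI)
    fix x y assume x: "x \<in> C" and y: "y \<in> C" and e: "enc x = enc y"
    have "\<And>i. i < length ds \<Longrightarrow> B x (es ! i) = B y (es ! i)"
      using e unfolding enc_def by (metis (no_types, lifting))
    then have "lc x ds es = lc y ds es" unfolding lc_def by simp
    then show "x = y" using G_lc1[OF G] x y by (metis G_sub[OF G] subalg_def subsetI order_antisym_conv)
  qed
  define dec where "dec = the_inv_into C enc"
  have de[simp]: "dec (enc x) = x" if "x \<in> C" for x
    unfolding dec_def using the_inv_into_f_f[OF inj that] .
  define M :: "('l, nat \<Rightarrow> 'l) module" where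
    "M = \<lparr>carrier = enc ` C, mult = (\<lambda>u v. enc (mul (dec u) (dec v))), one = enc one,
          zero = enc 0, add = (\<lambda>u v. enc (dec u + dec v)), smult = (\<lambda>c u. enc (sc c (dec u)))\<rparr>"
  define N' where "N' u = N (dec u)" for u
  have Ms[simp]: "carrier M = enc ` C" "\<one>\<^bsub>M\<^esub> = enc one" "\<zero>\<^bsub>M\<^esub> = enc 0"
    "\<And>u v. u \<otimes>\<^bsub>M\<^esub> v = enc (mul (dec u) (dec v))"
    "\<And>u v. u \<oplus>\<^bsub>M\<^esub> v = enc (dec u + dec v)"
    "\<And>c u. c \<odot>\<^bsub>M\<^esub> u = enc (sc c (dec u))"
    unfolding M_def by simp_all
  have AG: "abelian_group M"
  proof (rule abelian_groupI)
    fix x y z assume "x \<in> carrier M" "y \<in> carrier M" "z \<in> carrier M"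
    then obtain a b c where "a \<in> C" "b \<in> C" "c \<in> C" "x = enc a" "y = enc b" "z = enc c" by auto
    then show "x \<oplus>\<^bsub>M\<^esub> y \<in> carrier M" "(x \<oplus>\<^bsub>M\<^esub> y) \<oplus>\<^bsub>M\<^esub> z = x \<oplus>\<^bsub>M\<^esub> (y \<oplus>\<^bsub>M\<^esub> z)"
      "x \<oplus>\<^bsub>M\<^esub> y = y \<oplus>\<^bsub>M\<^esub> x" "\<zero>\<^bsub>M\<^esub> \<oplus>\<^bsub>M\<^esub> x = x"
      by (simp_all add: add_ac)
    show "\<exists>y\<in>carrier M. y \<oplus>\<^bsub>M\<^esub> x = \<zero>\<^bsub>M\<^esub>"
      using \<open>a \<in> C\<close> \<open>x = enc a\<close> by (auto intro!: bexI[of _ "- a"])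
  qed simp
  have R1: "nonassoc_ring_1 M" unfolding nonassoc_ring_1_def
    using AG by (auto simp: one_l one_r mul_add_l mul_add_r)
  have A1: "nonassoc_algebra M" unfolding nonassoc_algebra_def
    using R1 by (auto simp: sc_add sc_add2 sc_mult sc_one mul_sc_l mul_sc_r)
  have Q1: "quadratic_form M N'" unfolding quadratic_form_def N'_def Let_def
  proof (intro conjI allI ballI)
    fix c x assume "x \<in> carrier M"
    then obtain a where a: "a \<in> C" "x = enc a" by auto
    then show "N (dec (c \<odot>\<^bsub>M\<^esub> x)) = c\<^sup>2 * N (dec x)" by (simp add: N_sc)
  next
    fix c x x' y assume "x \<in> carrier M" "x' \<in> carrier M" "y \<in> carrier M"
    then obtain a a' b where a: "a \<in> C" "a' \<in> C" "b \<in> C" "x = enc a" "x' = enc a'" "y = enc b" by auto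
    have e1: "B (a + a') b = B a b + B a' b" using B_add1 a by simp
    have e2: "B (sc c a) b = c * B a b" using B_sc1 a by simp
    have e3: "B b (a + a') = B b a + B b a'" using B_add2 a by simp
    have e4: "B b (sc c a) = c * B b a" using B_sc2 a by simp
    show "N (dec (x \<oplus>\<^bsub>M\<^esub> x' \<oplus>\<^bsub>M\<^esub> y)) - N (dec (x \<oplus>\<^bsub>M\<^esub> x')) - N (dec y) =
       N (dec (x \<oplus>\<^bsub>M\<^esub> y)) - N (dec x) - N (dec y) + (N (dec (x' \<oplus>\<^bsub>M\<^esub> y)) - N (dec x') - N (dec y))"
      using e1 a unfolding B_def by simp
    show "N (dec (c \<odot>\<^bsub>M\<^esub> x \<oplus>\<^bsub>M\<^esub> y)) - N (dec (c \<odot>\<^bsub>M\<^esub> x)) - N (dec y) =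
       c * (N (dec (x \<oplus>\<^bsub>M\<^esub> y)) - N (dec x) - N (dec y))"
      using e2 a unfolding B_def by simp
    show "N (dec (y \<oplus>\<^bsub>M\<^esub> (x \<oplus>\<^bsub>M\<^esub> x'))) - N (dec y) - N (dec (x \<oplus>\<^bsub>M\<^esub> x')) =
       N (dec (y \<oplus>\<^bsub>M\<^esub> x)) - N (dec y) - N (dec x) + (N (dec (y \<oplus>\<^bsub>M\<^esub> x')) - N (dec y) - N (dec x'))"
      using e3 a unfolding B_def by simp
    show "N (dec (y \<oplus>\<^bsub>M\<^esub> c \<odot>\<^bsub>M\<^esub> x)) - N (dec y) - N (dec (c \<odot>\<^bsub>M\<^esub> x)) =
       c * (N (dec (y \<oplus>\<^bsub>M\<^esub> x)) - N (dec y) - N (dec x))"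
      using e4 a unfolding B_def by simp
  qed
  have CA: "composition_algebra M N'" unfolding composition_algebra_def
  proof (intro conjI ballI impI)
    show "nonassoc_algebra M" "quadratic_form M N'" using A1 Q1 .
    fix x assume "x \<in> carrier M" and h: "\<forall>y\<in>carrier M. N' (x \<oplus>\<^bsub>M\<^esub> y) - N' x - N' y = 0"
    then obtain a where a: "a \<in> C" "x = enc a" by auto
    have "a = 0" using nondegB[OF a(1)] h a unfolding N'_def B_def by auto
    then show "x = \<zero>\<^bsub>M\<^esub>" using a by simp
  next
    fix x y assume "x \<in> carrier M" "y \<in> carrier M"
    then show "N' (x \<otimes>\<^bsub>M\<^esub> y) = N' x * N' y" unfolding N'_def by (auto simp: N_mul)
  qed
  show ?thesis
    by (rule exI[of _ M], rule exI[of _ N'], rule exI[of _ enc]) (auto simp: CA N'_def)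
qed

end


context mqm
begin

lemma ev_single_add: "a \<in> CK \<Longrightarrow> b \<in> CK \<Longrightarrow>
   ev [(1, a \<oplus>\<^bsub>K\<^esub> b)] = ev [(1, a)] + ev [(1, b)]"
  unfolding ev_def by (auto simp: fun_eq_iff f_add2)

theorem main:
  "(\<exists>(M :: ('l, nat \<Rightarrow> 'l) module) N \<phi>.
            composition_algebra M N \<and> \<phi> \<in> ring_hom K M \<and>
            (\<forall>a\<in>carrier K. q a = N (\<phi> a)))
         \<or> (CHAR('l) = 2 \<and> ring_hom_to_field K q)"
proof (cases H)
  case True
  interpret C: calg C0 sc0 mul0 one0 N0 using calg[OF True] .
  obtain ds es where G: "C.good C0 ds es" using C.hurwitz by blast
  obtain M :: "('l, nat \<Rightarrow> 'l) module" and N' enc where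
    CA: "composition_algebra M N'" and
    e1: "\<forall>x\<in>C0. enc x \<in> carrier M \<and> N' (enc x) = N0 x" and
    e2: "\<forall>x\<in>C0. \<forall>y\<in>C0. enc x \<otimes>\<^bsub>M\<^esub> enc y = enc (mul0 x y) \<and> enc x \<oplus>\<^bsub>M\<^esub> enc y = enc (x + y)" and
    e3: "\<one>\<^bsub>M\<^esub> = enc one0"
    using C.transport[OF G] by blast
  define \<phi> where "\<phi> a = enc (ev [(1, a)])" for a
  have inC: "ev [(1, a)] \<in> C0" if "a \<in> CK" for a using C0I that by simp
  have hom: "\<phi> \<in> ring_hom K M"
  proof (rule ring_hom_memI)
    fix x assume x: "x \<in> CK"
    show "\<phi> x \<in> carrier M" unfolding \<phi>_def using e1 inC x by blast
    fix y assume y: "y \<in> CK"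
    show "\<phi> (x \<otimes>\<^bsub>K\<^esub> y) = \<phi> x \<otimes>\<^bsub>M\<^esub> \<phi> y"
      unfolding \<phi>_def using e2 inC x y mul0_ev[of "[(1, x)]" "[(1, y)]"] by simp
    show "\<phi> (x \<oplus>\<^bsub>K\<^esub> y) = \<phi> x \<oplus>\<^bsub>M\<^esub> \<phi> y"
      unfolding \<phi>_def using e2 inC x y ev_single_add by simp
  next
    show "\<phi> \<one>\<^bsub>K\<^esub> = \<one>\<^bsub>M\<^esub>" unfolding \<phi>_def e3 one0_def ..
  qed
  have "\<forall>a\<in>CK. q a = N' (\<phi> a)"
  proof
    fix a assume a: "a \<in> CK"
    have "N' (\<phi> a) = N0 (ev [(1, a)])" unfolding \<phi>_def using e1 inC a by blast
    also have "\<dots> = Qf [(1, a)]" using N0_ev[OF True] a by simp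
    also have "\<dots> = q a" by simp
    finally show "q a = N' (\<phi> a)" ..
  qed
  then show ?thesis using CA hom by blast
next
  case False
  then have two: "(2::'l) = 0" and f0: "\<And>a b. a \<in> CK \<Longrightarrow> b \<in> CK \<Longrightarrow> f a b = 0"
    unfolding H_def by auto
  have "of_nat 2 = (0::'l)" using two by simp
  then have "CHAR('l) dvd 2" by (simp only: of_nat_eq_0_iff_char_dvd)
  moreover have "CHAR('l) \<noteq> 1" using CHAR_not_1 by simp
  ultimately have ch: "CHAR('l) = 2"
    using dvd_imp_le[of "CHAR('l)" 2] by (cases "CHAR('l)") (auto simp: less_Suc_eq_le le_Suc_eq)
  have qa: "q (x \<oplus>\<^bsub>K\<^esub> y) = q x + q y" if "x \<in> CK" "y \<in> CK" for x y
    using f0[OF that] unfolding f_def by (simp add: algebra_simps)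
  have "ring_hom_to_field K q" unfolding ring_hom_to_field_def
    using q_mul q_one qa by simp
  then show ?thesis using ch by blast
qed

end


theorem theorem1p2:
  fixes K :: "('k, 'b) ring_scheme" and q :: "'k \<Rightarrow> 'l::field"
  assumes "nonassoc_ring_1 K"
    and "mult_quadratic_map K q"
  shows "(\<exists>(M :: ('l, nat \<Rightarrow> 'l) module) N \<phi>.
            composition_algebra M N \<and> \<phi> \<in> ring_hom K M \<and>
            (\<forall>a\<in>carrier K. q a = N (\<phi> a)))
         \<or> (CHAR('l) = 2 \<and> ring_hom_to_field K q)"
proof -
  interpret mqm K q using assms by (rule mqm.intro)
  show ?thesis by (rule main)
qed

end
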